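(* There exists a constant $\kappa>0$ such that for all $0<T\le\infty$, all $u\in Z_{6,T}$ and all $\theta\in L^2(0,T;L^{3/2}(\mathbb{R}^3))$, $\|C(u,\theta)\|_{L^2(0,T;L^{3/2}(\mathbb{R}^3))}\le\kappa\|u\|_{Z_{6,T}}\|\theta\|_{L^2(0,T;L^{3/2}(\mathbb{R}^3))}$.
   Context: $(e^{t\Delta})_{t\ge0}$ is the heat semigroup on $\mathbb{R}^3$; $C(u,\theta)(t)=-\int_0^t e^{(t-s)\Delta}\operatorname{div}(\theta(s)u(s))\,ds$. For $1\le p\le\infty$ and $0<T\le\infty$, $Z_{p,T}$ is the space of vector fields $u\in L^1_{\mathrm{loc}}(0,T;L^p(\mathbb{R}^3)^3)$ with $\|u\|_{Z_{p,T}}=\operatorname{ess\,sup}_{t\in(0,T)}t^{\frac12(1-\frac3p)}\|u(t)\|_{L^p}<\infty$; in particular $\|u\|_{Z_{6,T}}=\operatorname{ess\,sup}_t t^{1/4}\|u(t)\|_{L^6}$. *)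

theory Defs
  imports "HOL-Analysis.Analysis" "HOL-Probability.Essential_Supremum"
begin

definition ennpow :: "ennreal \<Rightarrow> real \<Rightarrow> ennreal" where
  "ennpow x a = (if x = \<infinity> then \<infinity> else ennreal (enn2real x powr a))"

definition tint :: "ereal \<Rightarrow> real set" where
  "tint T = {t. 0 < t \<and> ereal t < T}"

text \<open>L^p norm on R^3 (value infinity if the function is not in L^p).\<close>
definition Lp_norm :: "real \<Rightarrow> (real^3 \<Rightarrow> 'b::real_normed_vector) \<Rightarrow> ennreal" where
  "Lp_norm p f = ennpow (\<integral>\<^sup>+ x. ennreal (norm (f x) powr p) \<partial>lborel) (1 / p)"

definition L2Lp_norm :: "ereal \<Rightarrow> real \<Rightarrow> (real \<Rightarrow> real^3 \<Rightarrow> 'b::real_normed_vector) \<Rightarrow> ennreal" where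
  "L2Lp_norm T p f = ennpow (\<integral>\<^sup>+ t \<in> tint T. (Lp_norm p (f t))\<^sup>2 \<partial>lborel) (1 / 2)"

definition Z_norm :: "real \<Rightarrow> ereal \<Rightarrow> (real \<Rightarrow> real^3 \<Rightarrow> real^3) \<Rightarrow> ennreal" where
  "Z_norm p T u = esssup (restrict_space lborel (tint T))
      (\<lambda>t. ennreal (t powr (1/2 * (1 - 3 / p))) * Lp_norm p (u t))"

definition heat_kernel :: "real \<Rightarrow> real^3 \<Rightarrow> real" where
  "heat_kernel \<tau> z = (4 * pi * \<tau>) powr (-3/2) * exp (- (norm z)\<^sup>2 / (4 * \<tau>))"

definition grad_heat_kernel :: "real \<Rightarrow> real^3 \<Rightarrow> real^3" where
  "grad_heat_kernel \<tau> z = (- heat_kernel \<tau> z / (2 * \<tau>)) *\<^sub>R z"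

text \<open>(e^{\<tau>\<Delta>} div f)(x) = \<integral> \<nabla>G_\<tau>(x-y) \<cdot> f(y) dy, so
  C(u,\<theta>)(t)(x) = - \<integral>_0^t \<integral> \<nabla>G_{t-s}(x-y) \<cdot> \<theta>(s,y) u(s,y) dy ds.\<close>
definition Cop :: "(real \<Rightarrow> real^3 \<Rightarrow> real^3) \<Rightarrow> (real \<Rightarrow> real^3 \<Rightarrow> real) \<Rightarrow> real \<Rightarrow> real^3 \<Rightarrow> real" where
  "Cop u \<theta> t x = - (\<integral> s. (\<integral> y. grad_heat_kernel (t - s) (x - y) \<bullet> (\<theta> s y *\<^sub>R u s y) \<partial>lborel)
                     \<partial>(restrict_space lborel {0<..<t}))"

end

theory Submission
  imports Defs "HOL-Probability.Distributions"
begin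

lemma ennpow_ennreal: "0 \<le> r \<Longrightarrow> ennpow (ennreal r) a = ennreal (r powr a)"
  by (simp add: ennpow_def)

lemma ennpow_0[simp]: "ennpow 0 a = 0"
  by (simp add: ennpow_def)

lemma ennpow_top[simp]: "ennpow \<infinity> a = \<infinity>"
  by (simp add: ennpow_def)

lemma ennpow_eq_top_iff: "ennpow x a = \<infinity> \<longleftrightarrow> x = \<infinity>"
  by (simp add: ennpow_def)

lemma ennpow_1[simp]: "ennpow x 1 = x"
  by (cases x) (auto simp: ennpow_def)

lemma ennpow_eq_0_iff: "ennpow x a = 0 \<longleftrightarrow> x = 0"
  by (cases x) (auto simp: ennpow_def)

lemma ennpow_mono: "x \<le> y \<Longrightarrow> 0 \<le> a \<Longrightarrow> ennpow x a \<le> ennpow y a"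
proof (cases x; cases y)
  fix r s assume "x \<le> y" "0 \<le> a" "x = ennreal r" "0 \<le> r" "y = ennreal s" "0 \<le> s"
  then show ?thesis by (auto simp: ennpow_def intro!: ennreal_leI powr_mono2)
qed (auto simp: ennpow_def top_unique)

lemma ennpow_mult: "0 < a \<Longrightarrow> ennpow (x * y) a = ennpow x a * ennpow y a"
proof (cases x; cases y)
  fix r s assume "0 < a" "x = ennreal r" "0 \<le> r" "y = ennreal s" "0 \<le> s"
  then show ?thesis by (auto simp: ennpow_def ennreal_mult'[symmetric] powr_mult ennreal_mult_eq_top_iff)
qed (auto simp: ennpow_def ennreal_mult_eq_top_iff ennreal_top_mult ennreal_mult_top)

lemma ennpow_ennpow: "0 \<le> a \<Longrightarrow> ennpow (ennpow x a) b = ennpow x (a * b)"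
  by (cases x) (auto simp: ennpow_def powr_powr)

lemma ennpow_add: "ennpow x a * ennpow x b = ennpow x (a + b)"
  by (cases x) (auto simp: ennpow_def ennreal_mult' powr_add)

lemma measurable_ennpow[measurable]:
  "f \<in> borel_measurable M \<Longrightarrow> (\<lambda>x. ennpow (f x) a) \<in> borel_measurable M"
proof -
  assume f: "f \<in> borel_measurable M"
  have "{x \<in> space M. f x = \<infinity>} = f -` {\<infinity>} \<inter> space M" by auto
  also have "\<dots> \<in> sets M" using f by (rule measurable_sets) simp
  finally have s: "{x \<in> space M. f x = \<infinity>} \<in> sets M" .
  have "(\<lambda>x. ennreal (enn2real (f x) powr a)) \<in> borel_measurable M" using f by measurable
  then show ?thesis unfolding ennpow_def
    by (rule measurable_If[OF _ _ s, rotated]) simp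
qed
lemma ennpow_top'[simp]: "ennpow top a = top"
  using ennpow_top[of a] by (simp add: infinity_ennreal_def)
lemma ennpow_pos: "0 < x \<Longrightarrow> 0 < ennpow x a"
  using ennpow_eq_0_iff[of x a] by (simp add: zero_less_iff_neq_zero less_le) 

lemma young_ennreal:
  fixes p q c :: real
  assumes pq: "p > 1" "q > 1" "1/p + 1/q = 1" and c: "c > 0"
  shows "x * y \<le> ennreal (c powr p / p) * ennpow x p + ennreal (c powr (-q) / q) * ennpow y q"
proof (cases "x = \<infinity> \<or> y = \<infinity>")
  case True
  have cp: "ennreal (c powr p / p) > 0" "ennreal (c powr (-q) / q) > 0" using pq c by auto
  show ?thesis
  proof (cases "x = 0 \<or> y = 0")
    case True then show ?thesis by auto
  next
    case False
    have a: "ennreal (c powr p / p) * ennpow x p = \<infinity>" if "x = \<infinity>"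
      using cp that c pq by (simp add: ennreal_mult_top)
    have b: "ennreal (c powr (-q) / q) * ennpow y q = \<infinity>" if "y = \<infinity>"
      using cp that c pq by (simp add: ennreal_mult_top)
    from \<open>x = \<infinity> \<or> y = \<infinity>\<close> a b show ?thesis by auto
  qed
next
  case False
  then have "x \<noteq> \<infinity>" "y \<noteq> \<infinity>" by auto
  then obtain r s where r: "x = ennreal r" "0 \<le> r" and s: "y = ennreal s" "0 \<le> s"
    by (cases x; cases y) auto
  have "r * s = (c * r) * (s / c)" using c by simp
  also have "\<dots> \<le> (c * r) powr p / p + (s / c) powr q / q"
    by (rule Youngs_inequality) (use pq c r s in auto)
  also have "\<dots> = c powr p / p * r powr p + c powr (-q) / q * s powr q"
    using c r s by (simp add: powr_mult powr_divide powr_minus divide_simps)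
  finally have "r * s \<le> c powr p / p * r powr p + c powr (-q) / q * s powr q" .
  then show ?thesis using r s c pq
    by (simp add: ennpow_ennreal ennreal_mult'[symmetric] ennreal_plus[symmetric] del: ennreal_plus)
qed

lemma holder_ennreal:
  fixes p q :: real
  assumes pq: "p > 1" "q > 1" "1/p + 1/q = 1"
  assumes f[measurable]: "f \<in> borel_measurable M" and g[measurable]: "g \<in> borel_measurable M"
  shows "(\<integral>\<^sup>+x. f x * g x \<partial>M) \<le>
     ennpow (\<integral>\<^sup>+x. ennpow (f x) p \<partial>M) (1/p) * ennpow (\<integral>\<^sup>+x. ennpow (g x) q \<partial>M) (1/q)"
proof -
  define F where "F = (\<integral>\<^sup>+x. ennpow (f x) p \<partial>M)"
  define G where "G = (\<integral>\<^sup>+x. ennpow (g x) q \<partial>M)"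
  show ?thesis
  proof (cases "F = 0 \<or> G = 0")
    case True
    then have "AE x in M. f x * g x = 0"
    proof
      assume "F = 0"
      then have "AE x in M. ennpow (f x) p = 0" unfolding F_def
        by (subst (asm) nn_integral_0_iff_AE) auto
      then show ?thesis by eventually_elim (simp add: ennpow_eq_0_iff)
    next
      assume "G = 0"
      then have "AE x in M. ennpow (g x) q = 0" unfolding G_def
        by (subst (asm) nn_integral_0_iff_AE) auto
      then show ?thesis by eventually_elim (simp add: ennpow_eq_0_iff)
    qed
    then have "(\<integral>\<^sup>+x. f x * g x \<partial>M) = 0"
      by (subst nn_integral_0_iff_AE) auto
    then show ?thesis by simp
  next
    case False
    then have F0: "F > 0" and G0: "G > 0" by (auto simp: zero_less_iff_neq_zero)
    show ?thesis
    proof (cases "F = \<infinity> \<or> G = \<infinity>")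
      case True
      have "ennpow F (1/p) > 0" "ennpow G (1/q) > 0" using F0 G0 by (auto intro: ennpow_pos)
      with True have "ennpow F (1/p) * ennpow G (1/q) = top"
        unfolding ennreal_mult_eq_top_iff by (auto simp: ennpow_eq_top_iff infinity_ennreal_def)
      then show ?thesis by (simp add: F_def G_def)
    next
      case False
      then obtain Fr Gr where Fr: "F = ennreal Fr" "Fr > 0" and Gr: "G = ennreal Gr" "Gr > 0"
      proof -
        obtain Fr where "F = ennreal Fr" "0 \<le> Fr" using False by (cases F) auto
        moreover obtain Gr where "G = ennreal Gr" "0 \<le> Gr" using False by (cases G) auto
        ultimately show ?thesis using F0 G0 that by auto
      qed
      define c where "c = (Gr / Fr) powr (1 / (p * q))"
      have c0: "c > 0" using Fr Gr by (simp add: c_def)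
      have "(\<integral>\<^sup>+x. f x * g x \<partial>M) \<le>
        (\<integral>\<^sup>+x. ennreal (c powr p / p) * ennpow (f x) p + ennreal (c powr (-q) / q) * ennpow (g x) q \<partial>M)"
        by (intro nn_integral_mono young_ennreal[OF pq c0])
      also have "\<dots> = ennreal (c powr p / p) * F + ennreal (c powr (-q) / q) * G"
        by (simp add: nn_integral_add nn_integral_cmult F_def G_def)
      also have "\<dots> = ennreal (c powr p / p * Fr + c powr (-q) / q * Gr)"
        using Fr Gr c0 pq by (simp add: ennreal_mult'[symmetric] ennreal_plus[symmetric] del: ennreal_plus)
      also have "c powr p / p * Fr + c powr (-q) / q * Gr = Fr powr (1/p) * Gr powr (1/q)"
      proof -
        have pq': "p * q = p + q" using pq by (simp add: field_simps)
        have ip: "1/p = 1 - 1/q" "1/q = 1 - 1/p" using pq by auto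
        have e1: "1/(p*q) * p = 1/q" "1/(p*q) * (-q) = -(1/p)" using pq by auto
        have "c powr p = (Gr / Fr) powr (1/q)" unfolding c_def powr_powr e1 ..
        then have 1: "c powr p * Fr = Fr powr (1/p) * Gr powr (1/q)"
          using Fr Gr by (simp add: powr_divide ip(1) powr_diff)
        have "c powr (-q) = (Gr / Fr) powr (-(1/p))" unfolding c_def powr_powr e1 ..
        also have "\<dots> = Fr powr (1/p) / Gr powr (1/p)"
          using Fr Gr by (simp add: powr_minus powr_divide)
        finally have c2: "c powr (-q) = Fr powr (1/p) / Gr powr (1/p)" .
        have g2: "Gr powr (1/q) = Gr / Gr powr (1/p)"
          using Gr by (simp add: ip(2) powr_diff)
        have 2: "c powr (-q) * Gr = Fr powr (1/p) * Gr powr (1/q)"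
          unfolding c2 g2 by simp
        have "c powr p / p * Fr + c powr (-q) / q * Gr = (1/p + 1/q) * (Fr powr (1/p) * Gr powr (1/q))"
          using 1 2 by (simp add: algebra_simps)
        then show ?thesis using pq by simp
      qed
      also have "ennreal (Fr powr (1/p) * Gr powr (1/q)) = ennpow F (1/p) * ennpow G (1/q)"
        using Fr Gr by (simp add: ennpow_ennreal ennreal_mult')
      finally show ?thesis by (simp add: F_def G_def)
    qed
  qed
qed

lemma nn_pow0:
  fixes b x :: real assumes b: "b > -1" and x: "x \<ge> 0"
  shows "(\<integral>\<^sup>+s. ennreal (s powr b) * indicator {0..x} s \<partial>lborel) = ennreal (x powr (b+1) / (b+1))"
proof -
  have "((\<lambda>s. if s \<in> {0..x} then s powr b else 0) has_integral (x powr (b+1) / (b+1))) UNIV"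
    unfolding has_integral_restrict_UNIV by (rule has_integral_powr_from_0[OF b x])
  then have "(\<integral>\<^sup>+s. ennreal (if s \<in> {0..x} then s powr b else 0) \<partial>lborel) = ennreal (x powr (b+1) / (b+1))"
    by (intro nn_integral_has_integral_lborel) auto
  moreover have "\<And>s. ennreal (s powr b) * indicator {0..x} s = ennreal (if s \<in> {0..x} then s powr b else 0)"
    by (auto simp: indicator_def)
  ultimately show ?thesis by simp
qed

lemma nn_powinf:
  fixes e a :: real assumes e: "e < -1" and a: "a > 0"
  shows "(\<integral>\<^sup>+s. ennreal (s powr e) * indicator {a..} s \<partial>lborel) = ennreal (-(a powr (e+1)) / (e+1))"
proof -
  have "((\<lambda>s. if s \<in> {a..} then s powr e else 0) has_integral (-(a powr (e+1)) / (e+1))) UNIV"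
    unfolding has_integral_restrict_UNIV by (rule has_integral_powr_to_inf[OF e a])
  then have "(\<integral>\<^sup>+s. ennreal (if s \<in> {a..} then s powr e else 0) \<partial>lborel) = ennreal (-(a powr (e+1)) / (e+1))"
    by (intro nn_integral_has_integral_lborel) auto
  moreover have "\<And>s. ennreal (s powr e) * indicator {a..} s = ennreal (if s \<in> {a..} then s powr e else 0)"
    by (auto simp: indicator_def)
  ultimately show ?thesis by simp
qed

lemma nn_reflect:
  fixes f :: "real \<Rightarrow> ennreal" assumes [measurable]: "f \<in> borel_measurable borel"
  shows "(\<integral>\<^sup>+s. f s \<partial>lborel) = (\<integral>\<^sup>+r. f (t - r) \<partial>lborel)"
  using nn_integral_real_affine[of f "-1" t] by simp

lemma nn_shift:
  fixes f :: "real \<Rightarrow> ennreal" assumes [measurable]: "f \<in> borel_measurable borel"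
  shows "(\<integral>\<^sup>+s. f s \<partial>lborel) = (\<integral>\<^sup>+r. f (t + r) \<partial>lborel)"
  using nn_integral_real_affine[of f "1" t] by simp

lemma beta_bound:
  fixes \<alpha> \<beta> :: real assumes a: "-1 < \<alpha>" "\<alpha> \<le> 0" and b: "-1 < \<beta>" "\<beta> \<le> 0"
  shows "\<exists>C. \<forall>t>0. (\<integral>\<^sup>+s. ennreal ((t - s) powr \<alpha> * s powr \<beta>) * indicator {0<..<t} s \<partial>lborel)
            \<le> ennreal (C * t powr (\<alpha> + \<beta> + 1))"
proof (intro exI allI impI)
  fix t :: real assume t: "t > 0"
  let ?h = "t / 2"
  have h: "?h > 0" using t by simp
  have "(\<integral>\<^sup>+s. ennreal ((t - s) powr \<alpha> * s powr \<beta>) * indicator {0<..<t} s \<partial>lborel)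
     \<le> (\<integral>\<^sup>+s. ennreal (?h powr \<alpha>) * (ennreal (s powr \<beta>) * indicator {0..?h} s)
          + ennreal (?h powr \<beta>) * (ennreal ((t - s) powr \<alpha>) * indicator {?h..t} s) \<partial>lborel)"
  proof (intro nn_integral_mono)
    fix s :: real
    show "ennreal ((t - s) powr \<alpha> * s powr \<beta>) * indicator {0<..<t} s
      \<le> ennreal (?h powr \<alpha>) * (ennreal (s powr \<beta>) * indicator {0..?h} s)
          + ennreal (?h powr \<beta>) * (ennreal ((t - s) powr \<alpha>) * indicator {?h..t} s)"
    proof (cases "s \<in> {0<..<t}")
      case False then show ?thesis by simp
    next
      case True
      show ?thesis
      proof (cases "s \<le> ?h")
        case True
        have "(t - s) powr \<alpha> \<le> ?h powr \<alpha>" using \<open>s \<in> {0<..<t}\<close> True a by (intro powr_mono2') auto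
        then have "(t - s) powr \<alpha> * s powr \<beta> \<le> ?h powr \<alpha> * s powr \<beta>"
          by (intro mult_right_mono) auto
        then show ?thesis using True \<open>s \<in> {0<..<t}\<close>
          by (auto simp: ennreal_mult'[symmetric] intro!: add_increasing2 ennreal_leI)
      next
        case False
        have "s powr \<beta> \<le> ?h powr \<beta>" using \<open>s \<in> {0<..<t}\<close> False b by (intro powr_mono2') auto
        then have "(t - s) powr \<alpha> * s powr \<beta> \<le> ?h powr \<beta> * (t - s) powr \<alpha>"
          by (subst mult.commute, intro mult_right_mono) auto
        then show ?thesis using False \<open>s \<in> {0<..<t}\<close>
          by (auto simp: ennreal_mult'[symmetric] intro!: add_increasing ennreal_leI)
      qed
    qed
  qed
  also have "\<dots> = ennreal (?h powr \<alpha>) * (\<integral>\<^sup>+s. ennreal (s powr \<beta>) * indicator {0..?h} s \<partial>lborel)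
      + ennreal (?h powr \<beta>) * (\<integral>\<^sup>+s. ennreal ((t - s) powr \<alpha>) * indicator {?h..t} s \<partial>lborel)"
    by (simp add: nn_integral_add nn_integral_cmult)
  also have "(\<integral>\<^sup>+s. ennreal ((t - s) powr \<alpha>) * indicator {?h..t} s \<partial>lborel)
     = (\<integral>\<^sup>+r. ennreal (r powr \<alpha>) * indicator {0..?h} r \<partial>lborel)"
    by (subst nn_reflect[where t=t]) (auto intro!: nn_integral_cong simp: indicator_def)
  also have "\<dots> = ennreal (?h powr (\<alpha>+1) / (\<alpha>+1))" using a h by (intro nn_pow0) auto
  also have "(\<integral>\<^sup>+s. ennreal (s powr \<beta>) * indicator {0..?h} s \<partial>lborel) = ennreal (?h powr (\<beta>+1) / (\<beta>+1))"
    using b h by (intro nn_pow0) auto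
  also have "ennreal (?h powr \<alpha>) * ennreal (?h powr (\<beta>+1) / (\<beta>+1)) + ennreal (?h powr \<beta>) * ennreal (?h powr (\<alpha>+1) / (\<alpha>+1))
     = ennreal ((2 powr (-(\<alpha>+\<beta>+1)) * (1/(\<beta>+1) + 1/(\<alpha>+1))) * t powr (\<alpha>+\<beta>+1))"
  proof -
    have "?h powr \<alpha> * (?h powr (\<beta>+1) / (\<beta>+1)) + ?h powr \<beta> * (?h powr (\<alpha>+1) / (\<alpha>+1))
      = ?h powr (\<alpha>+\<beta>+1) * (1/(\<beta>+1) + 1/(\<alpha>+1))"
      by (simp add: powr_add[symmetric] algebra_simps add_divide_distrib)
    also have "?h powr (\<alpha>+\<beta>+1) = 2 powr (-(\<alpha>+\<beta>+1)) * t powr (\<alpha>+\<beta>+1)"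
    proof -
      have "?h powr (\<alpha>+\<beta>+1) = t powr (\<alpha>+\<beta>+1) / 2 powr (\<alpha>+\<beta>+1)"
        by (rule powr_divide)
      also have "\<dots> = 2 powr (-(\<alpha>+\<beta>+1)) * t powr (\<alpha>+\<beta>+1)"
        using powr_minus[of 2 "\<alpha>+\<beta>+1"] by (simp add: divide_inverse)
      finally show ?thesis .
    qed
    finally show ?thesis using a b t
      by (simp add: ennreal_mult'[symmetric] ennreal_plus[symmetric] del: ennreal_plus)
  qed
  finally show "(\<integral>\<^sup>+s. ennreal ((t - s) powr \<alpha> * s powr \<beta>) * indicator {0<..<t} s \<partial>lborel)
            \<le> ennreal ((2 powr (-(\<alpha>+\<beta>+1)) * (1/(\<beta>+1) + 1/(\<alpha>+1))) * t powr (\<alpha> + \<beta> + 1))" .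
qed


lemma tail_bound:
  fixes \<gamma> \<delta> :: real assumes g: "\<gamma> \<le> 0" and d: "-1 < \<delta>" "\<delta> \<le> 0" and gd: "\<gamma> + \<delta> < -1"
  shows "\<exists>C. \<forall>s>0. (\<integral>\<^sup>+t. ennreal (t powr \<gamma> * (t - s) powr \<delta>) * indicator {s<..} t \<partial>lborel)
            \<le> ennreal (C * s powr (\<gamma> + \<delta> + 1))"
proof (intro exI allI impI)
  fix s :: real assume s: "s > 0"
  let ?e = "\<gamma> + \<delta>"
  have "(\<integral>\<^sup>+t. ennreal (t powr \<gamma> * (t - s) powr \<delta>) * indicator {s<..} t \<partial>lborel)
     \<le> (\<integral>\<^sup>+t. ennreal (s powr \<gamma>) * (ennreal ((t - s) powr \<delta>) * indicator {s..(2 * s)} t)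
          + ennreal (2 powr (-\<delta>)) * (ennreal (t powr ?e) * indicator {(2 * s)..} t) \<partial>lborel)"
  proof (intro nn_integral_mono)
    fix t :: real
    show "ennreal (t powr \<gamma> * (t - s) powr \<delta>) * indicator {s<..} t
     \<le> ennreal (s powr \<gamma>) * (ennreal ((t - s) powr \<delta>) * indicator {s..(2 * s)} t)
          + ennreal (2 powr (-\<delta>)) * (ennreal (t powr ?e) * indicator {(2 * s)..} t)"
    proof (cases "s < t")
      case False then show ?thesis by simp
    next
      case True
      show ?thesis
      proof (cases "t \<le> 2 * s")
        case True
        have "t powr \<gamma> \<le> s powr \<gamma>" using \<open>s < t\<close> s g by (intro powr_mono2') auto
        then have "t powr \<gamma> * (t - s) powr \<delta> \<le> s powr \<gamma> * (t - s) powr \<delta>"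
          by (intro mult_right_mono) auto
        then show ?thesis using True \<open>s < t\<close>
          by (auto simp: ennreal_mult'[symmetric] intro!: add_increasing2 ennreal_leI)
      next
        case False
        have "(t - s) powr \<delta> \<le> (t/2) powr \<delta>" using \<open>s < t\<close> False d s by (intro powr_mono2') auto
        also have "(t/2) powr \<delta> = 2 powr (-\<delta>) * t powr \<delta>"
        proof -
          have "(t/2) powr \<delta> = t powr \<delta> / 2 powr \<delta>" by (rule powr_divide)
          then show ?thesis unfolding powr_minus divide_inverse by (simp only: mult.commute)
        qed
        finally have "t powr \<gamma> * (t - s) powr \<delta> \<le> t powr \<gamma> * (2 powr (-\<delta>) * t powr \<delta>)"
          by (intro mult_left_mono) auto
        also have "\<dots> = 2 powr (-\<delta>) * t powr ?e" by (simp add: powr_add)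
        finally show ?thesis using False \<open>s < t\<close>
          by (auto simp: ennreal_mult'[symmetric] intro!: add_increasing ennreal_leI)
      qed
    qed
  qed
  also have "\<dots> = ennreal (s powr \<gamma>) * (\<integral>\<^sup>+t. ennreal ((t - s) powr \<delta>) * indicator {s..(2 * s)} t \<partial>lborel)
      + ennreal (2 powr (-\<delta>)) * (\<integral>\<^sup>+t. ennreal (t powr ?e) * indicator {(2 * s)..} t \<partial>lborel)"
    by (simp add: nn_integral_add nn_integral_cmult)
  also have "(\<integral>\<^sup>+t. ennreal ((t - s) powr \<delta>) * indicator {s..(2 * s)} t \<partial>lborel)
     = (\<integral>\<^sup>+r. ennreal (r powr \<delta>) * indicator {0..s} r \<partial>lborel)"
    by (subst nn_shift[where t=s]) (auto intro!: nn_integral_cong simp: indicator_def)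
  also have "\<dots> = ennreal (s powr (\<delta>+1) / (\<delta>+1))" using d s by (intro nn_pow0) auto
  also have "(\<integral>\<^sup>+t. ennreal (t powr ?e) * indicator {(2 * s)..} t \<partial>lborel) = ennreal (-((2 * s) powr (?e+1)) / (?e+1))"
    using gd s by (intro nn_powinf) auto
  also have "ennreal (s powr \<gamma>) * ennreal (s powr (\<delta>+1) / (\<delta>+1)) + ennreal (2 powr (-\<delta>)) * ennreal (-((2 * s) powr (?e+1)) / (?e+1))
     = ennreal ((1/(\<delta>+1) + 2 powr (\<gamma>+1) / (-(?e+1))) * s powr (?e + 1))"
  proof -
    have p1: "(2 * s) powr (?e+1) = 2 powr (?e+1) * s powr (?e+1)" using s by (simp add: powr_mult)
    have p2: "2 powr (-\<delta>) * 2 powr (?e+1) = 2 powr (\<gamma>+1)" by (simp add: powr_add[symmetric])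
    have p3: "s powr \<gamma> * s powr (\<delta>+1) = s powr (?e+1)" by (simp add: powr_add[symmetric] add.assoc)
    have A: "2 powr (-\<delta>) * (-((2 * s) powr (?e+1)) / (?e+1)) = 2 powr (\<gamma>+1) / (-(?e+1)) * s powr (?e+1)"
    proof -
      have "2 powr (-\<delta>) * (-((2 * s) powr (?e+1)) / (?e+1)) = (2 powr (-\<delta>) * 2 powr (?e+1)) * s powr (?e+1) / (-(?e+1))"
        using gd unfolding p1 by (simp add: field_simps)
      then show ?thesis unfolding p2 by simp
    qed
    have B: "s powr \<gamma> * (s powr (\<delta>+1) / (\<delta>+1)) = 1/(\<delta>+1) * s powr (?e+1)"
      using p3 by simp
    have E: "s powr \<gamma> * (s powr (\<delta>+1) / (\<delta>+1)) + 2 powr (-\<delta>) * (-((2 * s) powr (?e+1)) / (?e+1))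
        = (1/(\<delta>+1) + 2 powr (\<gamma>+1) / (-(?e+1))) * s powr (?e + 1)"
      unfolding A B by (simp add: algebra_simps)
    have nn: "0 \<le> -((2 * s) powr (?e+1)) / (?e+1)" using gd by (intro divide_nonpos_neg) auto
    have nn1: "0 \<le> s powr \<gamma> * (s powr (\<delta>+1) / (\<delta>+1))" using d by simp
    have nn2: "0 \<le> 2 powr (-\<delta>) * (-((2 * s) powr (?e+1)) / (?e+1))" using nn by (intro mult_nonneg_nonneg) auto
    have "ennreal (s powr \<gamma>) * ennreal (s powr (\<delta>+1) / (\<delta>+1)) + ennreal (2 powr (-\<delta>)) * ennreal (-((2 * s) powr (?e+1)) / (?e+1))
      = ennreal (s powr \<gamma> * (s powr (\<delta>+1) / (\<delta>+1))) + ennreal (2 powr (-\<delta>) * (-((2 * s) powr (?e+1)) / (?e+1)))"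
      by (metis ennreal_mult' powr_ge_zero)
    also have "\<dots> = ennreal (s powr \<gamma> * (s powr (\<delta>+1) / (\<delta>+1)) + 2 powr (-\<delta>) * (-((2 * s) powr (?e+1)) / (?e+1)))"
      using nn1 nn2 by (rule ennreal_plus[symmetric])
    finally show ?thesis unfolding E .
  qed
  finally show "(\<integral>\<^sup>+t. ennreal (t powr \<gamma> * (t - s) powr \<delta>) * indicator {s<..} t \<partial>lborel)
            \<le> ennreal ((1/(\<delta>+1) + 2 powr (\<gamma>+1) / (-(?e+1))) * s powr (\<gamma> + \<delta> + 1))" .
qed

definition kk :: "real \<Rightarrow> real^3 \<Rightarrow> real" where
 "kk \<tau> z = (if 0 < \<tau> then norm (grad_heat_kernel \<tau> z) else 0)"

lemma kk_meas: "(\<lambda>p. kk (fst p) (snd p)) \<in> borel_measurable (borel \<Otimes>\<^sub>M borel)"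
  unfolding kk_def grad_heat_kernel_def heat_kernel_def by measurable

lemma kk_meas2[measurable]: "(\<lambda>p. kk (f p) (g p)) \<in> borel_measurable M"
  if [measurable]: "f \<in> borel_measurable M" "g \<in> borel_measurable M"
  using measurable_compose[OF _ kk_meas, of "\<lambda>p. (f p, g p)" M] by simp

lemma kk_nonneg[simp]: "0 \<le> kk \<tau> z"
  by (simp add: kk_def)

lemma kk_minus: "kk \<tau> (- z) = kk \<tau> z"
  by (simp add: kk_def grad_heat_kernel_def heat_kernel_def)

lemma kk_formula: "0 < \<tau> \<Longrightarrow> kk \<tau> z = (4 * pi * \<tau>) powr (-3/2) * exp (- (norm z)\<^sup>2 / (4 * \<tau>)) / (2 * \<tau>) * norm z"
  by (simp add: kk_def grad_heat_kernel_def heat_kernel_def)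

lemma kk_scale:
  assumes t: "0 < \<tau>"
  shows "kk \<tau> (sqrt \<tau> *\<^sub>R z) = \<tau> powr (-2) * kk 1 z"
proof -
  have n: "norm (sqrt \<tau> *\<^sub>R z) = sqrt \<tau> * norm z" using t by simp
  have n2: "(norm (sqrt \<tau> *\<^sub>R z))\<^sup>2 = \<tau> * (norm z)\<^sup>2" using t by (simp add: n power_mult_distrib)
  have e: "exp (- (\<tau> * (norm z)\<^sup>2) / (4 * \<tau>)) = exp (- (norm z)\<^sup>2 / 4)" using t by simp
  have p: "(4 * pi * \<tau>) powr (-3/2) = (4 * pi) powr (-3/2) * \<tau> powr (-3/2)"
    using t by (simp add: powr_mult)
  have s: "sqrt \<tau> = \<tau> powr (1/2)" using t by (simp add: powr_half_sqrt)
  have q: "\<tau> powr (-3/2) * sqrt \<tau> / \<tau> = \<tau> powr (-2)"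
  proof -
    have "\<tau> powr (-3/2) * \<tau> powr (1/2) / \<tau> = \<tau> powr (-3/2) * \<tau> powr (1/2) * \<tau> powr (-1)"
    proof -
      have h: "\<tau> powr (-1) = inverse \<tau>" using powr_minus[of \<tau> 1] t by simp
      show ?thesis by (simp only: divide_inverse h)
    qed
    also have "\<dots> = \<tau> powr (-3/2 + 1/2 + -1)" by (simp only: powr_add)
    also have "(-3/2 + 1/2 + -1::real) = -2" by simp
    finally show ?thesis unfolding s .
  qed
  have "kk \<tau> (sqrt \<tau> *\<^sub>R z) = (4 * pi * \<tau>) powr (-3/2) * exp (- (\<tau> * (norm z)\<^sup>2) / (4 * \<tau>)) / (2 * \<tau>) * (sqrt \<tau> * norm z)"
    unfolding kk_formula[OF t] n2 by (simp only: n)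
  also have "\<dots> = (4 * pi) powr (-3/2) * exp (- (norm z)\<^sup>2 / 4) / 2 * norm z * (\<tau> powr (-3/2) * sqrt \<tau> / \<tau>)"
    unfolding e p by (simp add: field_simps)
  also have "\<dots> = \<tau> powr (-2) * kk 1 z" unfolding q by (simp add: kk_formula)
  finally show ?thesis .
qed


lemma nn_affine3:
  fixes f :: "real^3 \<Rightarrow> ennreal" assumes [measurable]: "f \<in> borel_measurable borel" and c: "c \<noteq> 0"
  shows "(\<integral>\<^sup>+x. f x \<partial>lborel) = ennreal (\<bar>c\<bar>^3) * (\<integral>\<^sup>+x. f (t + c *\<^sub>R x) \<partial>lborel)"
  by (subst lborel_affine[OF c, of t]) (simp add: nn_integral_density nn_integral_distr nn_integral_cmult)

lemma nn_trans_x: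
  fixes f :: "real^3 \<Rightarrow> ennreal" assumes [measurable]: "f \<in> borel_measurable borel"
  shows "(\<integral>\<^sup>+x. f (x - y) \<partial>lborel) = (\<integral>\<^sup>+z. f z \<partial>lborel)"
  using nn_affine3[of f 1 "-y"] by simp

lemma nn_trans_y:
  fixes f :: "real^3 \<Rightarrow> ennreal" assumes [measurable]: "f \<in> borel_measurable borel"
  shows "(\<integral>\<^sup>+y. f (x - y) \<partial>lborel) = (\<integral>\<^sup>+z. f z \<partial>lborel)"
  using nn_affine3[of f "-1" x] by simp

definition Kn1 :: ennreal where "Kn1 = (\<integral>\<^sup>+z. ennreal (kk 1 z powr (6/5)) \<partial>lborel)"

lemma Kn_scale:
  assumes t: "0 < \<tau>"
  shows "(\<integral>\<^sup>+z. ennreal (kk \<tau> z powr (6/5)) \<partial>lborel) = ennreal (\<tau> powr (-9/10)) * Kn1"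
proof -
  have st: "sqrt \<tau> \<noteq> 0" using t by simp
  have "(\<integral>\<^sup>+z. ennreal (kk \<tau> z powr (6/5)) \<partial>lborel)
      = ennreal (\<bar>sqrt \<tau>\<bar>^3) * (\<integral>\<^sup>+z. ennreal (kk \<tau> (0 + sqrt \<tau> *\<^sub>R z) powr (6/5)) \<partial>lborel)"
    by (rule nn_affine3[OF _ st]) measurable
  also have "(\<lambda>z. ennreal (kk \<tau> (0 + sqrt \<tau> *\<^sub>R z) powr (6/5))) = (\<lambda>z. ennreal (\<tau> powr (-12/5)) * ennreal (kk 1 z powr (6/5)))"
  proof
    fix z
    have "kk \<tau> (0 + sqrt \<tau> *\<^sub>R z) powr (6/5) = (\<tau> powr (-2) * kk 1 z) powr (6/5)" using kk_scale[OF t] by simp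
    also have "\<dots> = (\<tau> powr (-2)) powr (6/5) * kk 1 z powr (6/5)" using t by (simp add: powr_mult) 
    also have "(\<tau> powr (-2)) powr (6/5) = \<tau> powr (-12/5)" by (simp add: powr_powr)
    finally show "ennreal (kk \<tau> (0 + sqrt \<tau> *\<^sub>R z) powr (6/5)) = ennreal (\<tau> powr (-12/5)) * ennreal (kk 1 z powr (6/5))"
      by (simp add: ennreal_mult)
  qed
  also have "ennreal (\<bar>sqrt \<tau>\<bar>^3) * (\<integral>\<^sup>+z. ennreal (\<tau> powr (-12/5)) * ennreal (kk 1 z powr (6/5)) \<partial>lborel)
     = ennreal (\<bar>sqrt \<tau>\<bar>^3 * \<tau> powr (-12/5)) * Kn1"
    by (simp add: nn_integral_cmult Kn1_def ennreal_mult mult.assoc)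
  also have "\<bar>sqrt \<tau>\<bar>^3 * \<tau> powr (-12/5) = \<tau> powr (-9/10)"
  proof -
    have "\<bar>sqrt \<tau>\<bar>^3 = \<tau> powr (3/2)"
      using t by (simp add: powr_half_sqrt[symmetric] powr_realpow[symmetric] powr_powr)
    then have "\<bar>sqrt \<tau>\<bar>^3 * \<tau> powr (-12/5) = \<tau> powr (3/2 + -12/5)" by (simp only: powr_add)
    also have "(3/2 + -12/5 :: real) = -9/10" by simp
    finally show ?thesis .
  qed
  finally show ?thesis .
qed


lemma gauss1_finite: "(\<integral>\<^sup>+x. ennreal (exp (- x\<^sup>2 / 10)) \<partial>(lborel::real measure)) < \<infinity>"
proof -
  have "\<And>x::real. exp (- x\<^sup>2 / 10) = sqrt (10 * pi) * normal_density 0 (sqrt 5) x"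
    by (simp add: normal_density_def)
  then have "(\<integral>\<^sup>+x. ennreal (exp (- x\<^sup>2 / 10)) \<partial>(lborel::real measure))
     = ennreal (sqrt (10 * pi)) * (\<integral>\<^sup>+x. ennreal (normal_density 0 (sqrt 5) x) \<partial>lborel)"
    by (simp add: ennreal_mult nn_integral_cmult)
  also have "(\<integral>\<^sup>+x. ennreal (normal_density 0 (sqrt 5) x) \<partial>lborel) = 1"
    by (subst nn_integral_eq_integral) auto
  finally show ?thesis by (simp add: ennreal_mult_less_top)
qed

lemma gauss3_finite: "(\<integral>\<^sup>+z. ennreal (exp (- (norm z)\<^sup>2 / 10)) \<partial>(lborel::(real^3) measure)) < \<infinity>"
proof -
  have "\<And>z::real^3. exp (- (norm z)\<^sup>2 / 10) = (\<Prod>b\<in>Basis. exp (- (z \<bullet> b)\<^sup>2 / 10))"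
  proof -
    fix z :: "real^3"
    have "(norm z)\<^sup>2 = (\<Sum>b\<in>Basis. (z \<bullet> b)\<^sup>2)"
      unfolding power2_norm_eq_inner by (subst euclidean_inner) (simp add: power2_eq_square)
    then have "- (norm z)\<^sup>2 / 10 = (\<Sum>b\<in>Basis. - (z \<bullet> b)\<^sup>2 / 10)"
      by (simp add: sum_negf sum_divide_distrib)
    then show "exp (- (norm z)\<^sup>2 / 10) = (\<Prod>b\<in>Basis. exp (- (z \<bullet> b)\<^sup>2 / 10))"
      by (simp add: exp_sum)
  qed
  then have eqz: "\<And>z::real^3. ennreal (exp (- (norm z)\<^sup>2 / 10)) = (\<Prod>b\<in>Basis. ennreal (exp (- (z \<bullet> b)\<^sup>2 / 10)))"
    by (simp add: prod_ennreal)
  then have "(\<integral>\<^sup>+z. ennreal (exp (- (norm z)\<^sup>2 / 10)) \<partial>(lborel::(real^3) measure))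
      = (\<integral>\<^sup>+z. (\<Prod>b\<in>Basis. ennreal (exp (- (z \<bullet> b)\<^sup>2 / 10))) \<partial>(lborel::(real^3) measure))"
    by (intro nn_integral_cong eqz)
  also have "\<dots> = (\<Prod>b\<in>(Basis::(real^3) set). (\<integral>\<^sup>+x. ennreal (exp (- x\<^sup>2 / 10)) \<partial>lborel))"
    by (rule nn_integral_lborel_prod) auto
  also have "\<dots> < \<infinity>"
    using gauss1_finite by (simp add: power_less_top_ennreal)
  finally show ?thesis .
qed

lemma kk1_bound: "kk 1 z powr (6/5) \<le> 5 * ((4 * pi) powr (-3/2) / 2) powr (6/5) * exp (- (norm z)\<^sup>2 / 10)"
proof -
  define r where "r = norm z"
  define A where "A = (4 * pi) powr (-3/2) / 2"
  have r0: "0 \<le> r" and A0: "0 \<le> A" by (auto simp: r_def A_def)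
  have "kk 1 z = A * exp (- r\<^sup>2 / 4) * r" by (simp add: kk_formula r_def A_def)
  then have "kk 1 z powr (6/5) = A powr (6/5) * (exp (- r\<^sup>2 / 4) powr (6/5) * r powr (6/5))"
    using r0 A0 by (simp add: powr_mult mult.assoc)
  also have "exp (- r\<^sup>2 / 4) powr (6/5) = exp (- 3 * r\<^sup>2 / 10)"
    by (simp add: powr_def)
  also have "r powr (6/5) \<le> 5 * exp (r\<^sup>2 / 5)"
  proof -
    have "r powr (6/5) \<le> 1 + r\<^sup>2"
    proof (cases "r \<le> 1")
      case True
      then have "r powr (6/5) \<le> 1 powr (6/5)" using r0 by (intro powr_mono2) auto
      then have "r powr (6/5) \<le> 1" by simp
      moreover have "0 \<le> r\<^sup>2" by simp
      ultimately show ?thesis by linarith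
    next
      case False
      then have "r powr (6/5) \<le> r powr 2" by (intro powr_mono) auto
      then show ?thesis using r0 by (simp add: powr_realpow)
    qed
    also have "\<dots> \<le> 5 * (1 + r\<^sup>2 / 5)" by simp
    also have "\<dots> \<le> 5 * exp (r\<^sup>2 / 5)" using exp_ge_add_one_self[of "r\<^sup>2 / 5"] by (intro mult_left_mono) auto
    finally show ?thesis .
  qed
  then have "A powr (6/5) * (exp (- 3 * r\<^sup>2 / 10) * r powr (6/5)) \<le> A powr (6/5) * (exp (- 3 * r\<^sup>2 / 10) * (5 * exp (r\<^sup>2 / 5)))"
    by (intro mult_left_mono) auto
  also have "exp (- 3 * r\<^sup>2 / 10) * (5 * exp (r\<^sup>2 / 5)) = 5 * exp (- r\<^sup>2 / 10)"
  proof -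
    have "exp (- 3 * r\<^sup>2 / 10) * exp (r\<^sup>2 / 5) = exp (- 3 * r\<^sup>2 / 10 + r\<^sup>2 / 5)" by (rule exp_add[symmetric])
    also have "- 3 * r\<^sup>2 / 10 + r\<^sup>2 / 5 = - r\<^sup>2 / 10" by simp
    finally show ?thesis by simp
  qed
  finally show ?thesis by (simp add: A_def r_def mult.assoc mult.left_commute)
qed

lemma Kn1_finite: "Kn1 < \<infinity>"
proof -
  have "Kn1 \<le> (\<integral>\<^sup>+(z::real^3). ennreal (5 * ((4 * pi) powr (-3/2) / 2) powr (6/5)) * ennreal (exp (- (norm z)\<^sup>2 / 10)) \<partial>lborel)"
    unfolding Kn1_def
  proof (intro nn_integral_mono)
    fix z :: "real^3"
    have "ennreal (kk 1 z powr (6/5)) \<le> ennreal (5 * ((4 * pi) powr (-3/2) / 2) powr (6/5) * exp (- (norm z)\<^sup>2 / 10))"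
      by (rule ennreal_leI[OF kk1_bound])
    also have "\<dots> = ennreal (5 * ((4 * pi) powr (-3/2) / 2) powr (6/5)) * ennreal (exp (- (norm z)\<^sup>2 / 10))"
      by (rule ennreal_mult) auto
    finally show "ennreal (kk 1 z powr (6/5)) \<le> ennreal (5 * ((4 * pi) powr (-3/2) / 2) powr (6/5)) * ennreal (exp (- (norm z)\<^sup>2 / 10))" .
  qed
  also have "\<dots> = ennreal (5 * ((4 * pi) powr (-3/2) / 2) powr (6/5)) * (\<integral>\<^sup>+z. ennreal (exp (- (norm z)\<^sup>2 / 10)) \<partial>(lborel::(real^3) measure))"
    by (simp add: nn_integral_cmult)
  also have "\<dots> < \<infinity>" using gauss3_finite by (simp add: ennreal_mult_less_top)
  finally show ?thesis .
qed

lemma tint_borel[measurable]: "tint T \<in> sets borel"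
  unfolding tint_def by measurable

lemma ennpow_indicator: "0 < a \<Longrightarrow> ennpow (indicator A x) a = indicator A x"
  by (simp add: indicator_def ennpow_ennreal[of 1, simplified] ennpow_def)

lemma holder3:
  assumes f[measurable]: "f \<in> borel_measurable M" and g[measurable]: "g \<in> borel_measurable M"
    and h[measurable]: "h \<in> borel_measurable M"
  shows "(\<integral>\<^sup>+x. f x * g x * h x \<partial>M) \<le>
     ennpow (\<integral>\<^sup>+x. ennpow (f x) (3/2) \<partial>M) (2/3) * ennpow (\<integral>\<^sup>+x. ennpow (g x) 6 \<partial>M) (1/6)
       * ennpow (\<integral>\<^sup>+x. ennpow (h x) 6 \<partial>M) (1/6)"
proof -
  define P1 where "P1 = ennpow (\<integral>\<^sup>+x. ennpow (f x) (3/2) \<partial>M) (2/3)"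
  define G6 where "G6 = (\<integral>\<^sup>+x. ennpow (g x) 6 \<partial>M)"
  define H6 where "H6 = (\<integral>\<^sup>+x. ennpow (h x) 6 \<partial>M)"
  have "(\<integral>\<^sup>+x. f x * g x * h x \<partial>M) = (\<integral>\<^sup>+x. f x * (g x * h x) \<partial>M)" by (simp add: mult.assoc)
  also have "\<dots> \<le> ennpow (\<integral>\<^sup>+x. ennpow (f x) (3/2) \<partial>M) (1/(3/2)) * ennpow (\<integral>\<^sup>+x. ennpow (g x * h x) 3 \<partial>M) (1/3)"
    by (rule holder_ennreal) auto
  finally have A: "(\<integral>\<^sup>+x. f x * g x * h x \<partial>M) \<le> P1 * ennpow (\<integral>\<^sup>+x. ennpow (g x * h x) 3 \<partial>M) (1/3)"
    by (simp add: P1_def)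
  have "(\<integral>\<^sup>+x. ennpow (g x * h x) 3 \<partial>M) = (\<integral>\<^sup>+x. ennpow (g x) 3 * ennpow (h x) 3 \<partial>M)"
    by (simp add: ennpow_mult)
  also have "\<dots> \<le> ennpow (\<integral>\<^sup>+x. ennpow (ennpow (g x) 3) 2 \<partial>M) (1/2) * ennpow (\<integral>\<^sup>+x. ennpow (ennpow (h x) 3) 2 \<partial>M) (1/2)"
    by (rule holder_ennreal) auto
  also have "\<dots> = ennpow G6 (1/2) * ennpow H6 (1/2)"
    by (simp add: ennpow_ennpow G6_def H6_def)
  finally have B: "(\<integral>\<^sup>+x. ennpow (g x * h x) 3 \<partial>M) \<le> ennpow G6 (1/2) * ennpow H6 (1/2)" .
  have "P1 * ennpow (\<integral>\<^sup>+x. ennpow (g x * h x) 3 \<partial>M) (1/3) \<le> P1 * ennpow (ennpow G6 (1/2) * ennpow H6 (1/2)) (1/3)"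
    by (intro mult_left_mono ennpow_mono B) auto
  also have "\<dots> = P1 * ennpow G6 (1/6) * ennpow H6 (1/6)"
    by (simp add: ennpow_mult ennpow_ennpow mult.assoc)
  finally show ?thesis using A unfolding P1_def G6_def H6_def by (rule order_trans[rotated])
qed

lemma ennpow_ennreal_ind: "0 \<le> r \<Longrightarrow> 0 < a \<Longrightarrow> ennpow (ennreal r * indicator A z) a = ennreal (r powr a) * indicator A z"
  by (simp add: ennpow_mult ennpow_indicator ennpow_ennreal)

definition Cb1 :: real where
  "Cb1 = max 0 (SOME C. \<forall>t>0. (\<integral>\<^sup>+s. ennreal ((t - s) powr (-9/10) * s powr (-3/4)) * indicator {0<..<t} s \<partial>lborel)
            \<le> ennreal (C * t powr (-9/10 + -3/4 + 1)))"

lemma Cb1: "0 \<le> Cb1" "t > 0 \<Longrightarrow> (\<integral>\<^sup>+s. ennreal ((t - s) powr (-9/10) * s powr (-3/4)) * indicator {0<..<t} s \<partial>lborel)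
            \<le> ennreal (Cb1 * t powr (-13/20))"
proof -
  let ?P = "\<lambda>C. \<forall>t>0. (\<integral>\<^sup>+s. ennreal ((t - s) powr (-9/10) * s powr (-3/4)) * indicator {0<..<t} s \<partial>lborel)
            \<le> ennreal (C * t powr (-9/10 + -3/4 + 1))"
  have "\<exists>C. ?P C" by (rule beta_bound) auto
  then have P: "?P (SOME C. ?P C)" by (rule someI_ex)
  show "0 \<le> Cb1" by (simp add: Cb1_def)
  assume t: "t > 0"
  have "(\<integral>\<^sup>+s. ennreal ((t - s) powr (-9/10) * s powr (-3/4)) * indicator {0<..<t} s \<partial>lborel)
      \<le> ennreal ((SOME C. ?P C) * t powr (-13/20))"
    proof -
      have e: "(-9/10 + -3/4 + 1 :: real) = -13/20" by simp
      show ?thesis using P t unfolding e by blast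
    qed
  also have "\<dots> \<le> ennreal (Cb1 * t powr (-13/20))"
    by (intro ennreal_leI mult_right_mono) (auto simp: Cb1_def)
  finally show "(\<integral>\<^sup>+s. ennreal ((t - s) powr (-9/10) * s powr (-3/4)) * indicator {0<..<t} s \<partial>lborel)
            \<le> ennreal (Cb1 * t powr (-13/20))" .
qed

definition Cb2 :: real where
  "Cb2 = max 0 (SOME C. \<forall>t>0. (\<integral>\<^sup>+s. ennreal ((t - s) powr (-3/4) * s powr (-1/2)) * indicator {0<..<t} s \<partial>lborel)
            \<le> ennreal (C * t powr (-3/4 + -1/2 + 1)))"

lemma Cb2: "0 \<le> Cb2" "t > 0 \<Longrightarrow> (\<integral>\<^sup>+s. ennreal ((t - s) powr (-3/4) * s powr (-1/2)) * indicator {0<..<t} s \<partial>lborel)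
            \<le> ennreal (Cb2 * t powr (-1/4))"
proof -
  let ?P = "\<lambda>C. \<forall>t>0. (\<integral>\<^sup>+s. ennreal ((t - s) powr (-3/4) * s powr (-1/2)) * indicator {0<..<t} s \<partial>lborel)
            \<le> ennreal (C * t powr (-3/4 + -1/2 + 1))"
  have "\<exists>C. ?P C" by (rule beta_bound) auto
  then have P: "?P (SOME C. ?P C)" by (rule someI_ex)
  show "0 \<le> Cb2" by (simp add: Cb2_def)
  assume t: "t > 0"
  have "(\<integral>\<^sup>+s. ennreal ((t - s) powr (-3/4) * s powr (-1/2)) * indicator {0<..<t} s \<partial>lborel)
      \<le> ennreal ((SOME C. ?P C) * t powr (-1/4))"
    proof -
      have e: "(-3/4 + -1/2 + 1 :: real) = -1/4" by simp
      show ?thesis using P t unfolding e by blast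
    qed
  also have "\<dots> \<le> ennreal (Cb2 * t powr (-1/4))"
    by (intro ennreal_leI mult_right_mono) (auto simp: Cb2_def)
  finally show "(\<integral>\<^sup>+s. ennreal ((t - s) powr (-3/4) * s powr (-1/2)) * indicator {0<..<t} s \<partial>lborel)
            \<le> ennreal (Cb2 * t powr (-1/4))" .
qed

definition Ct :: real where
  "Ct = max 0 (SOME C. \<forall>s>0. (\<integral>\<^sup>+t. ennreal (t powr (-13/60) * (t - s) powr (-19/20)) * indicator {s<..} t \<partial>lborel)
            \<le> ennreal (C * s powr (-13/60 + -19/20 + 1)))"

lemma Ct: "0 \<le> Ct" "s > 0 \<Longrightarrow> (\<integral>\<^sup>+t. ennreal (t powr (-13/60) * (t - s) powr (-19/20)) * indicator {s<..} t \<partial>lborel)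
            \<le> ennreal (Ct * s powr (-1/6))"
proof -
  let ?P = "\<lambda>C. \<forall>s>0. (\<integral>\<^sup>+t. ennreal (t powr (-13/60) * (t - s) powr (-19/20)) * indicator {s<..} t \<partial>lborel)
            \<le> ennreal (C * s powr (-13/60 + -19/20 + 1))"
  have "\<exists>C. ?P C" by (rule tail_bound) auto
  then have P: "?P (SOME C. ?P C)" by (rule someI_ex)
  show "0 \<le> Ct" by (simp add: Ct_def)
  assume s: "s > 0"
  have "(\<integral>\<^sup>+t. ennreal (t powr (-13/60) * (t - s) powr (-19/20)) * indicator {s<..} t \<partial>lborel)
      \<le> ennreal ((SOME C. ?P C) * s powr (-1/6))"
    proof -
      have e: "(-13/60 + -19/20 + 1 :: real) = -1/6" by simp
      show ?thesis using P s unfolding e by blast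
    qed
  also have "\<dots> \<le> ennreal (Ct * s powr (-1/6))"
    by (intro ennreal_leI mult_right_mono) (auto simp: Ct_def)
  finally show "(\<integral>\<^sup>+t. ennreal (t powr (-13/60) * (t - s) powr (-19/20)) * indicator {s<..} t \<partial>lborel)
            \<le> ennreal (Ct * s powr (-1/6))" .
qed

definition K1 :: real where "K1 = enn2real Kn1"

lemma K1: "0 \<le> K1" "Kn1 = ennreal K1"
  using Kn1_finite by (auto simp: K1_def less_top)

locale setting =
  fixes T :: ereal and u :: "real \<Rightarrow> real^3 \<Rightarrow> real^3" and \<theta> :: "real \<Rightarrow> real^3 \<Rightarrow> real"
  assumes umeas: "(\<lambda>(t, y). u t y) \<in> borel_measurable (restrict_space (lborel \<Otimes>\<^sub>M lborel) (tint T \<times> UNIV))"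
  assumes thmeas: "(\<lambda>(t, y). \<theta> t y) \<in> borel_measurable (restrict_space (lborel \<Otimes>\<^sub>M lborel) (tint T \<times> UNIV))"
begin

definition th0 :: "real \<Rightarrow> real^3 \<Rightarrow> real" where "th0 s y = (if s \<in> tint T then \<theta> s y else 0)"
definition u0 :: "real \<Rightarrow> real^3 \<Rightarrow> real^3" where "u0 s y = (if s \<in> tint T then u s y else 0)"

lemma th0_meas_pair: "(\<lambda>p. th0 (fst p) (snd p)) \<in> borel_measurable (borel \<Otimes>\<^sub>M borel)"
proof -
  have "(\<lambda>p. if p \<in> tint T \<times> UNIV then (case p of (t, y) \<Rightarrow> \<theta> t y) else 0) \<in> borel_measurable (lborel \<Otimes>\<^sub>M lborel)"
    using thmeas by (subst (asm) measurable_restrict_space_iff) auto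
  then have "(\<lambda>p. th0 (fst p) (snd p)) \<in> borel_measurable (lborel \<Otimes>\<^sub>M lborel)"
    by (rule measurable_cong[THEN iffD1, rotated]) (auto simp: th0_def split: prod.splits)
  moreover have "sets (lborel \<Otimes>\<^sub>M lborel :: (real \<times> (real^3)) measure) = sets (borel \<Otimes>\<^sub>M borel)"
    by (intro sets_pair_measure_cong) auto
  ultimately show ?thesis using measurable_cong_sets by blast
qed

lemma u0_meas_pair: "(\<lambda>p. u0 (fst p) (snd p)) \<in> borel_measurable (borel \<Otimes>\<^sub>M borel)"
proof -
  have "(\<lambda>p. if p \<in> tint T \<times> UNIV then (case p of (t, y) \<Rightarrow> u t y) else 0) \<in> borel_measurable (lborel \<Otimes>\<^sub>M lborel)"
    using umeas by (subst (asm) measurable_restrict_space_iff) auto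
  then have "(\<lambda>p. u0 (fst p) (snd p)) \<in> borel_measurable (lborel \<Otimes>\<^sub>M lborel)"
    by (rule measurable_cong[THEN iffD1, rotated]) (auto simp: u0_def split: prod.splits)
  moreover have "sets (lborel \<Otimes>\<^sub>M lborel :: (real \<times> (real^3)) measure) = sets (borel \<Otimes>\<^sub>M borel)"
    by (intro sets_pair_measure_cong) auto
  ultimately show ?thesis using measurable_cong_sets by blast
qed

lemma th0_meas[measurable]: "(\<lambda>p. th0 (f p) (g p)) \<in> borel_measurable M"
  if [measurable]: "f \<in> borel_measurable M" "g \<in> borel_measurable M"
  using measurable_compose[OF _ th0_meas_pair, of "\<lambda>p. (f p, g p)" M] by simp

lemma u0_meas[measurable]: "(\<lambda>p. u0 (f p) (g p)) \<in> borel_measurable M"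
  if [measurable]: "f \<in> borel_measurable M" "g \<in> borel_measurable M"
  using measurable_compose[OF _ u0_meas_pair, of "\<lambda>p. (f p, g p)" M] by simp

lemma tint_sub: "t \<in> tint T \<Longrightarrow> s \<in> {0<..<t} \<Longrightarrow> s \<in> tint T"
  by (auto simp: tint_def intro: order.strict_trans[of _ "ereal t"])

definition F :: "real \<Rightarrow> real^3 \<Rightarrow> ennreal" where
  "F t x = (\<integral>\<^sup>+s. \<integral>\<^sup>+y. ennreal (kk (t - s) (x - y) * \<bar>th0 s y\<bar> * norm (u0 s y)) * indicator {0<..<t} s \<partial>lborel \<partial>lborel)"

lemma norm_integral_le_nn: "ennreal (norm (integral\<^sup>L M f)) \<le> (\<integral>\<^sup>+x. ennreal (norm (f x)) \<partial>M)"
proof (cases "integrable M f")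
  case True then show ?thesis by (rule integral_norm_bound_ennreal)
next
  case False then show ?thesis by (simp add: not_integrable_integral_eq)
qed

lemma Cop_bound:
  assumes t: "t \<in> tint T"
  shows "ennreal \<bar>Cop u \<theta> t x\<bar> \<le> F t x"
proof -
  define g where "g s = (\<integral>y. grad_heat_kernel (t - s) (x - y) \<bullet> (\<theta> s y *\<^sub>R u s y) \<partial>lborel)" for s
  have "ennreal \<bar>Cop u \<theta> t x\<bar> = ennreal (norm (\<integral>s. g s \<partial>(restrict_space lborel {0<..<t})))"
    by (simp add: Cop_def g_def)
  also have "\<dots> \<le> (\<integral>\<^sup>+s. ennreal (norm (g s)) \<partial>(restrict_space lborel {0<..<t}))"
    by (rule norm_integral_le_nn)
  also have "\<dots> = (\<integral>\<^sup>+s. ennreal (norm (g s)) * indicator {0<..<t} s \<partial>lborel)"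
    by (rule nn_integral_restrict_space) simp
  also have "\<dots> \<le> F t x"
    unfolding F_def
  proof (intro nn_integral_mono)
    fix s :: real
    show "ennreal (norm (g s)) * indicator {0<..<t} s
      \<le> (\<integral>\<^sup>+y. ennreal (kk (t - s) (x - y) * \<bar>th0 s y\<bar> * norm (u0 s y)) * indicator {0<..<t} s \<partial>lborel)"
    proof (cases "s \<in> {0<..<t}")
      case False then show ?thesis by simp
    next
      case True
      have sT: "s \<in> tint T" using tint_sub[OF t True] .
      have "ennreal (norm (g s)) \<le> (\<integral>\<^sup>+y. ennreal (norm (grad_heat_kernel (t - s) (x - y) \<bullet> (\<theta> s y *\<^sub>R u s y))) \<partial>lborel)"
        unfolding g_def by (rule norm_integral_le_nn)
      also have "\<dots> \<le> (\<integral>\<^sup>+y. ennreal (kk (t - s) (x - y) * \<bar>th0 s y\<bar> * norm (u0 s y)) \<partial>lborel)"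
      proof (intro nn_integral_mono ennreal_leI)
        fix y
        have "norm (grad_heat_kernel (t - s) (x - y) \<bullet> (\<theta> s y *\<^sub>R u s y))
            \<le> norm (grad_heat_kernel (t - s) (x - y)) * norm (\<theta> s y *\<^sub>R u s y)"
          unfolding real_norm_def by (rule Cauchy_Schwarz_ineq2)
        also have "\<dots> = kk (t - s) (x - y) * \<bar>th0 s y\<bar> * norm (u0 s y)"
          using True sT by (simp add: kk_def th0_def u0_def mult.assoc)
        finally show "norm (grad_heat_kernel (t - s) (x - y) \<bullet> (\<theta> s y *\<^sub>R u s y)) \<le> kk (t - s) (x - y) * \<bar>th0 s y\<bar> * norm (u0 s y)" .
      qed
      finally show ?thesis using True by (simp add: nn_integral_multc)
    qed
  qed
  finally show ?thesis .
qed

end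

locale setting2 = setting +
  fixes Zr :: real
  assumes Zr: "0 \<le> Zr"
  assumes ubound: "AE s in lborel. s \<in> tint T \<longrightarrow> (\<integral>\<^sup>+y. ennreal (norm (u s y) powr 6) \<partial>lborel) \<le> ennreal (Zr powr 6 * s powr (-3/2))"
begin

definition Q :: "real \<Rightarrow> real^3 \<Rightarrow> ennreal" where
  "Q t x = (\<integral>\<^sup>+s. \<integral>\<^sup>+y. ennreal (kk (t - s) (x - y) powr (6/5) * \<bar>th0 s y\<bar> powr (3/2)) * indicator {0<..<t} s \<partial>lborel \<partial>lborel)"

lemma tint_pos: "t \<in> tint T \<Longrightarrow> 0 < t" by (simp add: tint_def)

lemma I2_bound:
  assumes t: "0 < t"
  shows "(\<integral>\<^sup>+p. ennreal (kk (t - fst p) (x - snd p) powr (6/5) * fst p powr (-3/4)) * indicator {0<..<t} (fst p)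
     \<partial>(lborel \<Otimes>\<^sub>M (lborel :: (real^3) measure))) \<le> ennreal (K1 * Cb1 * t powr (-13/20))"
proof -
  have "(\<integral>\<^sup>+p. ennreal (kk (t - fst p) (x - snd p) powr (6/5) * fst p powr (-3/4)) * indicator {0<..<t} (fst p)
     \<partial>(lborel \<Otimes>\<^sub>M (lborel :: (real^3) measure)))
     = (\<integral>\<^sup>+s. \<integral>\<^sup>+y. ennreal (kk (t - s) (x - y) powr (6/5) * s powr (-3/4)) * indicator {0<..<t} s \<partial>lborel \<partial>lborel)"
    by (subst lborel.nn_integral_fst[symmetric]) (simp_all)
  also have "\<dots> = (\<integral>\<^sup>+s. ennreal (K1 * ((t - s) powr (-9/10) * s powr (-3/4))) * indicator {0<..<t} s \<partial>lborel)"
  proof (intro nn_integral_cong)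
    fix s :: real
    show "(\<integral>\<^sup>+y. ennreal (kk (t - s) (x - y) powr (6/5) * s powr (-3/4)) * indicator {0<..<t} s \<partial>lborel)
       = ennreal (K1 * ((t - s) powr (-9/10) * s powr (-3/4))) * indicator {0<..<t} s"
    proof (cases "s \<in> {0<..<t}")
      case False then show ?thesis by simp
    next
      case True
      have "(\<integral>\<^sup>+y. ennreal (kk (t - s) (x - y) powr (6/5) * s powr (-3/4)) * indicator {0<..<t} s \<partial>lborel)
          = ennreal (s powr (-3/4)) * (\<integral>\<^sup>+y. ennreal (kk (t - s) (x - y) powr (6/5)) \<partial>lborel)"
        using True by (simp add: ennreal_mult nn_integral_cmult mult.commute)
      also have "(\<integral>\<^sup>+y. ennreal (kk (t - s) (x - y) powr (6/5)) \<partial>lborel) = (\<integral>\<^sup>+z. ennreal (kk (t - s) z powr (6/5)) \<partial>lborel)"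
        by (rule nn_trans_y[where f="\<lambda>z. ennreal (kk (t - s) z powr (6/5))"]) measurable
      also have "\<dots> = ennreal ((t - s) powr (-9/10)) * ennreal K1"
        using True by (simp add: Kn_scale K1(2))
      finally show ?thesis using True K1(1) by (simp add: ennreal_mult[symmetric] mult_ac)
    qed
  qed
  also have "\<dots> = ennreal K1 * (\<integral>\<^sup>+s. ennreal ((t - s) powr (-9/10) * s powr (-3/4)) * indicator {0<..<t} s \<partial>lborel)"
    using K1(1) by (simp add: ennreal_mult nn_integral_cmult mult.assoc)
  also have "\<dots> \<le> ennreal K1 * ennreal (Cb1 * t powr (-13/20))"
    by (intro mult_left_mono Cb1(2) t) simp
  also have "\<dots> = ennreal (K1 * Cb1 * t powr (-13/20))"
    by (simp add: ennreal_mult'[OF K1(1)] mult.assoc)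
  finally show ?thesis .
qed


lemma I3_bound:
  assumes t: "t \<in> tint T"
  shows "(\<integral>\<^sup>+p. ennreal (norm (u0 (fst p) (snd p)) powr 6 * fst p powr (3/4)) * indicator {0<..<t} (fst p)
     \<partial>(lborel \<Otimes>\<^sub>M (lborel :: (real^3) measure))) \<le> ennreal (Zr powr 6 * 4 * t powr (1/4))"
proof -
  have t0: "0 < t" using t by (simp add: tint_def)
  have "(\<integral>\<^sup>+p. ennreal (norm (u0 (fst p) (snd p)) powr 6 * fst p powr (3/4)) * indicator {0<..<t} (fst p)
     \<partial>(lborel \<Otimes>\<^sub>M (lborel :: (real^3) measure)))
     = (\<integral>\<^sup>+s. \<integral>\<^sup>+y. ennreal (norm (u0 s y) powr 6 * s powr (3/4)) * indicator {0<..<t} s \<partial>lborel \<partial>lborel)"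
    by (subst lborel.nn_integral_fst[symmetric]) (simp_all)
  also have "\<dots> \<le> (\<integral>\<^sup>+s. ennreal (Zr powr 6 * s powr (-3/4)) * indicator {0..t} s \<partial>lborel)"
  proof (intro nn_integral_mono_AE)
    show "AE s in lborel. (\<integral>\<^sup>+y. ennreal (norm (u0 s y) powr 6 * s powr (3/4)) * indicator {0<..<t} s \<partial>lborel)
       \<le> ennreal (Zr powr 6 * s powr (-3/4)) * indicator {0..t} s"
      using ubound
    proof eventually_elim
      fix s assume ub: "s \<in> tint T \<longrightarrow> (\<integral>\<^sup>+y. ennreal (norm (u s y) powr 6) \<partial>lborel) \<le> ennreal (Zr powr 6 * s powr (-3/2))"
      show "(\<integral>\<^sup>+y. ennreal (norm (u0 s y) powr 6 * s powr (3/4)) * indicator {0<..<t} s \<partial>lborel)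
       \<le> ennreal (Zr powr 6 * s powr (-3/4)) * indicator {0..t} s"
      proof (cases "s \<in> {0<..<t}")
        case False then show ?thesis by simp
      next
        case True
        have sT: "s \<in> tint T" using tint_sub[OF t True] .
        have "(\<integral>\<^sup>+y. ennreal (norm (u0 s y) powr 6 * s powr (3/4)) * indicator {0<..<t} s \<partial>lborel)
           = (\<integral>\<^sup>+y. ennreal (s powr (3/4)) * ennreal (norm (u0 s y) powr 6) \<partial>lborel)"
          using True by (intro nn_integral_cong) (simp add: ennreal_mult' mult.commute)
        also have "\<dots> = ennreal (s powr (3/4)) * (\<integral>\<^sup>+y. ennreal (norm (u0 s y) powr 6) \<partial>lborel)"
          by (rule nn_integral_cmult) measurable
        also have "\<dots> = ennreal (s powr (3/4)) * (\<integral>\<^sup>+y. ennreal (norm (u s y) powr 6) \<partial>lborel)"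
          using sT by (simp add: u0_def)
        also have "\<dots> \<le> ennreal (s powr (3/4)) * ennreal (Zr powr 6 * s powr (-3/2))"
          using ub sT by (intro mult_left_mono) auto
        also have "\<dots> = ennreal (Zr powr 6 * s powr (-3/4))"
        proof -
          have "s powr (3/4) * (Zr powr 6 * s powr (-3/2)) = Zr powr 6 * (s powr (3/4) * s powr (-3/2))" by simp
          also have "s powr (3/4) * s powr (-3/2) = s powr (-3/4)"
            by (simp add: powr_add[symmetric])
          finally show ?thesis by (simp add: ennreal_mult'[symmetric])
        qed
        finally show ?thesis using True by simp
      qed
    qed
  qed
  also have "\<dots> = ennreal (Zr powr 6) * (\<integral>\<^sup>+s. ennreal (s powr (-3/4)) * indicator {0..t} s \<partial>lborel)"
    by (simp add: ennreal_mult nn_integral_cmult mult.assoc)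
  also have "(\<integral>\<^sup>+s. ennreal (s powr (-3/4)) * indicator {0..t} s \<partial>lborel) = ennreal (t powr (-3/4 + 1) / (-3/4 + 1))"
    using t0 by (intro nn_pow0) auto
  also have "ennreal (Zr powr 6) * ennreal (t powr (-3/4 + 1) / (-3/4 + 1)) = ennreal (Zr powr 6 * 4 * t powr (1/4))"
    by (simp add: ennreal_mult'[symmetric])
  finally show ?thesis .
qed

lemma I1_eq:
  "(\<integral>\<^sup>+p. ennreal (kk (t - fst p) (x - snd p) powr (6/5) * \<bar>th0 (fst p) (snd p)\<bar> powr (3/2)) * indicator {0<..<t} (fst p)
     \<partial>(lborel \<Otimes>\<^sub>M (lborel :: (real^3) measure))) = Q t x"
  unfolding Q_def by (subst lborel.nn_integral_fst[symmetric]) (simp_all)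

lemma F_eq:
  "F t x = (\<integral>\<^sup>+p. ennreal (kk (t - fst p) (x - snd p) * \<bar>th0 (fst p) (snd p)\<bar> * norm (u0 (fst p) (snd p))) * indicator {0<..<t} (fst p)
     \<partial>(lborel \<Otimes>\<^sub>M (lborel :: (real^3) measure)))"
  unfolding F_def by (subst lborel.nn_integral_fst[symmetric]) (simp_all)


lemma alg1:
  fixes a b z t :: real assumes "0 \<le> a" "0 \<le> b" "0 \<le> z" "0 < t"
  shows "((a * b * t powr (-13/20)) powr (1/6) * (z powr 6 * 4 * t powr (1/4)) powr (1/6)) powr (3/2)
       = (a * b * 4) powr (1/4) * z powr (3/2) * t powr (-1/10)"
proof -
  have "((a * b * t powr (-13/20)) powr (1/6) * (z powr 6 * 4 * t powr (1/4)) powr (1/6)) powr (3/2)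
      = ((a * b * t powr (-13/20)) * (z powr 6 * 4 * t powr (1/4))) powr (1/4)"
    using assms by (simp add: powr_mult[symmetric] powr_powr)
  also have "(a * b * t powr (-13/20)) * (z powr 6 * 4 * t powr (1/4)) = (a * b * 4) * z powr 6 * (t powr (-13/20) * t powr (1/4))"
    by (simp add: mult_ac)
  also have "t powr (-13/20) * t powr (1/4) = t powr (-2/5)" by (simp add: powr_add[symmetric])
  also have "((a * b * 4) * z powr 6 * t powr (-2/5)) powr (1/4) = (a * b * 4) powr (1/4) * (z powr 6) powr (1/4) * (t powr (-2/5)) powr (1/4)"
    using assms by (simp add: powr_mult)
  also have "(z powr 6) powr (1/4) = z powr (3/2)" by (simp add: powr_powr)
  also have "(t powr (-2/5)) powr (1/4) = t powr (-1/10)" by (simp add: powr_powr)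
  finally show ?thesis .
qed

lemma step1:
  assumes t: "t \<in> tint T"
  shows "ennpow (F t x) (3/2) \<le> Q t x * ennreal ((K1 * Cb1 * 4) powr (1/4) * Zr powr (3/2) * t powr (-1/10))"
proof -
  have t0: "0 < t" using t by (simp add: tint_def)
  define f1 where "f1 p = ennreal (kk (t - fst p) (x - snd p) powr (4/5) * \<bar>th0 (fst p) (snd p)\<bar>) * indicator {0<..<t} (fst p)" for p :: "real \<times> (real^3)"
  define f2 where "f2 p = ennreal (kk (t - fst p) (x - snd p) powr (1/5) * fst p powr (-1/8)) * indicator {0<..<t} (fst p)" for p :: "real \<times> (real^3)"
  define f3 where "f3 p = ennreal (norm (u0 (fst p) (snd p)) * fst p powr (1/8)) * indicator {0<..<t} (fst p)" for p :: "real \<times> (real^3)"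
  let ?P = "lborel \<Otimes>\<^sub>M (lborel :: (real^3) measure)"
  have [measurable]: "f1 \<in> borel_measurable ?P" "f2 \<in> borel_measurable ?P" "f3 \<in> borel_measurable ?P"
    unfolding f1_def f2_def f3_def by measurable
  have prod: "ennreal (kk (t - fst p) (x - snd p) * \<bar>th0 (fst p) (snd p)\<bar> * norm (u0 (fst p) (snd p))) * indicator {0<..<t} (fst p)
      = f1 p * f2 p * f3 p" for p
  proof (cases "fst p \<in> {0<..<t}")
    case False then show ?thesis by (simp add: f1_def f2_def f3_def)
  next
    case True
    have k: "kk (t - fst p) (x - snd p) powr (4/5) * kk (t - fst p) (x - snd p) powr (1/5) = kk (t - fst p) (x - snd p)"
      by (simp add: powr_add[symmetric] powr_one)
    have sp: "fst p powr (-1/8) * fst p powr (1/8) = 1" using True by (simp add: powr_add[symmetric])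
    have "kk (t - fst p) (x - snd p) * \<bar>th0 (fst p) (snd p)\<bar> * norm (u0 (fst p) (snd p))
       = (kk (t - fst p) (x - snd p) powr (4/5) * \<bar>th0 (fst p) (snd p)\<bar>) * (kk (t - fst p) (x - snd p) powr (1/5) * fst p powr (-1/8))
         * (norm (u0 (fst p) (snd p)) * fst p powr (1/8))"
    proof -
      have "(kk (t - fst p) (x - snd p) powr (4/5) * \<bar>th0 (fst p) (snd p)\<bar>) * (kk (t - fst p) (x - snd p) powr (1/5) * fst p powr (-1/8))
         * (norm (u0 (fst p) (snd p)) * fst p powr (1/8))
         = (kk (t - fst p) (x - snd p) powr (4/5) * kk (t - fst p) (x - snd p) powr (1/5)) * \<bar>th0 (fst p) (snd p)\<bar>
           * norm (u0 (fst p) (snd p)) * (fst p powr (-1/8) * fst p powr (1/8))"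
        by (simp add: mult_ac)
      also have "\<dots> = kk (t - fst p) (x - snd p) * \<bar>th0 (fst p) (snd p)\<bar> * norm (u0 (fst p) (snd p))"
        by (simp only: k sp mult_1_right)
      finally show ?thesis by (rule sym)
    qed
    then show ?thesis using True by (simp add: f1_def f2_def f3_def ennreal_mult'[symmetric] del: ennreal_mult')
  qed
  have e1: "ennpow (f1 p) (3/2) = ennreal (kk (t - fst p) (x - snd p) powr (6/5) * \<bar>th0 (fst p) (snd p)\<bar> powr (3/2)) * indicator {0<..<t} (fst p)" for p
    unfolding f1_def by (subst ennpow_ennreal_ind) (auto simp: powr_mult powr_powr)
  have e2: "ennpow (f2 p) 6 = ennreal (kk (t - fst p) (x - snd p) powr (6/5) * fst p powr (-3/4)) * indicator {0<..<t} (fst p)" for p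
    unfolding f2_def by (subst ennpow_ennreal_ind) (auto simp: powr_mult powr_powr)
  have e3: "ennpow (f3 p) 6 = ennreal (norm (u0 (fst p) (snd p)) powr 6 * fst p powr (3/4)) * indicator {0<..<t} (fst p)" for p
    unfolding f3_def by (subst ennpow_ennreal_ind) (auto simp: powr_mult powr_powr)
  have "F t x = (\<integral>\<^sup>+p. f1 p * f2 p * f3 p \<partial>?P)"
    unfolding F_eq prod ..
  also have "\<dots> \<le> ennpow (\<integral>\<^sup>+p. ennpow (f1 p) (3/2) \<partial>?P) (2/3) * ennpow (\<integral>\<^sup>+p. ennpow (f2 p) 6 \<partial>?P) (1/6)
       * ennpow (\<integral>\<^sup>+p. ennpow (f3 p) 6 \<partial>?P) (1/6)"
    by (rule holder3) measurable
  also have "\<dots> \<le> ennpow (Q t x) (2/3) * ennpow (ennreal (K1 * Cb1 * t powr (-13/20))) (1/6)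
       * ennpow (ennreal (Zr powr 6 * 4 * t powr (1/4))) (1/6)"
    unfolding e1 e2 e3 I1_eq
    by (intro mult_mono ennpow_mono I2_bound I3_bound t t0) auto
  also have "\<dots> = ennpow (Q t x) (2/3) * ennreal ((K1 * Cb1 * t powr (-13/20)) powr (1/6) * (Zr powr 6 * 4 * t powr (1/4)) powr (1/6))"
  proof -
    have h1: "ennpow (ennreal (K1 * Cb1 * t powr (-13/20))) (1/6) = ennreal ((K1 * Cb1 * t powr (-13/20)) powr (1/6))"
      using K1(1) Cb1(1) by (intro ennpow_ennreal) auto
    have h2: "ennpow (ennreal (Zr powr 6 * 4 * t powr (1/4))) (1/6) = ennreal ((Zr powr 6 * 4 * t powr (1/4)) powr (1/6))"
      using Zr by (intro ennpow_ennreal) auto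
    show ?thesis unfolding h1 h2 by (simp add: ennreal_mult mult.assoc)
  qed
  finally have "ennpow (F t x) (3/2) \<le> ennpow (ennpow (Q t x) (2/3) * ennreal ((K1 * Cb1 * t powr (-13/20)) powr (1/6) * (Zr powr 6 * 4 * t powr (1/4)) powr (1/6))) (3/2)"
    by (rule ennpow_mono) simp
  also have "\<dots> = Q t x * ennreal (((K1 * Cb1 * t powr (-13/20)) powr (1/6) * (Zr powr 6 * 4 * t powr (1/4)) powr (1/6)) powr (3/2))"
    by (simp add: ennpow_mult ennpow_ennpow ennpow_ennreal)
  also have "\<dots> = Q t x * ennreal ((K1 * Cb1 * 4) powr (1/4) * Zr powr (3/2) * t powr (-1/10))"
    by (simp only: alg1[OF K1(1) Cb1(1) Zr t0])
  finally show ?thesis .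
qed


definition A :: "real \<Rightarrow> ennreal" where
  "A s = (\<integral>\<^sup>+y. ennreal (\<bar>th0 s y\<bar> powr (3/2)) \<partial>lborel)"

lemma A_meas[measurable]: "A \<in> borel_measurable lborel"
  unfolding A_def by measurable

lemma step2:
  assumes t0: "0 < t"
  shows "(\<integral>\<^sup>+x. Q t x \<partial>lborel) = ennreal K1 * (\<integral>\<^sup>+s. ennreal ((t - s) powr (-9/10)) * A s * indicator {0<..<t} s \<partial>lborel)"
proof -
  have "(\<integral>\<^sup>+x. Q t x \<partial>lborel)
     = (\<integral>\<^sup>+s. \<integral>\<^sup>+x. \<integral>\<^sup>+y. ennreal (kk (t - s) (x - y) powr (6/5) * \<bar>th0 s y\<bar> powr (3/2)) * indicator {0<..<t} s \<partial>lborel \<partial>lborel \<partial>lborel)"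
    unfolding Q_def
    by (rule lborel_pair.Fubini[where f="\<lambda>(x, s). \<integral>\<^sup>+y. ennreal (kk (t - s) (x - y) powr (6/5) * \<bar>th0 s y\<bar> powr (3/2)) * indicator {0<..<t} s \<partial>lborel", simplified, symmetric])
      measurable
  also have "\<dots> = (\<integral>\<^sup>+s. \<integral>\<^sup>+y. \<integral>\<^sup>+x. ennreal (kk (t - s) (x - y) powr (6/5) * \<bar>th0 s y\<bar> powr (3/2)) * indicator {0<..<t} s \<partial>lborel \<partial>lborel \<partial>lborel)"
    by (intro nn_integral_cong lborel_pair.Fubini[where f="\<lambda>(x, y). ennreal (kk (t - s) (x - y) powr (6/5) * \<bar>th0 s y\<bar> powr (3/2)) * indicator {0<..<t} s" for s, simplified, symmetric])
      measurable
  also have "\<dots> = (\<integral>\<^sup>+s. ennreal ((t - s) powr (-9/10)) * A s * indicator {0<..<t} s * ennreal K1 \<partial>lborel)"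
  proof (intro nn_integral_cong)
    fix s :: real
    show "(\<integral>\<^sup>+y. \<integral>\<^sup>+x. ennreal (kk (t - s) (x - y) powr (6/5) * \<bar>th0 s y\<bar> powr (3/2)) * indicator {0<..<t} s \<partial>lborel \<partial>lborel)
       = ennreal ((t - s) powr (-9/10)) * A s * indicator {0<..<t} s * ennreal K1"
    proof (cases "s \<in> {0<..<t}")
      case False then show ?thesis by simp
    next
      case True
      have "(\<integral>\<^sup>+y. \<integral>\<^sup>+x. ennreal (kk (t - s) (x - y) powr (6/5) * \<bar>th0 s y\<bar> powr (3/2)) * indicator {0<..<t} s \<partial>lborel \<partial>lborel)
         = (\<integral>\<^sup>+y. ennreal (\<bar>th0 s y\<bar> powr (3/2)) * (\<integral>\<^sup>+x. ennreal (kk (t - s) (x - y) powr (6/5)) \<partial>lborel) \<partial>lborel)"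
      proof (intro nn_integral_cong)
        fix y :: "real^3"
        have "(\<integral>\<^sup>+x. ennreal (kk (t - s) (x - y) powr (6/5) * \<bar>th0 s y\<bar> powr (3/2)) * indicator {0<..<t} s \<partial>lborel)
           = (\<integral>\<^sup>+x. ennreal (\<bar>th0 s y\<bar> powr (3/2)) * ennreal (kk (t - s) (x - y) powr (6/5)) \<partial>lborel)"
          using True by (intro nn_integral_cong) (simp add: ennreal_mult' mult.commute)
        also have "\<dots> = ennreal (\<bar>th0 s y\<bar> powr (3/2)) * (\<integral>\<^sup>+x. ennreal (kk (t - s) (x - y) powr (6/5)) \<partial>lborel)"
          by (rule nn_integral_cmult) measurable
        finally show "(\<integral>\<^sup>+x. ennreal (kk (t - s) (x - y) powr (6/5) * \<bar>th0 s y\<bar> powr (3/2)) * indicator {0<..<t} s \<partial>lborel)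
           = ennreal (\<bar>th0 s y\<bar> powr (3/2)) * (\<integral>\<^sup>+x. ennreal (kk (t - s) (x - y) powr (6/5)) \<partial>lborel)" .
      qed
      also have "\<dots> = (\<integral>\<^sup>+y. ennreal (\<bar>th0 s y\<bar> powr (3/2)) * (ennreal ((t - s) powr (-9/10)) * ennreal K1) \<partial>lborel)"
      proof (intro nn_integral_cong)
        fix y :: "real^3"
        have "(\<integral>\<^sup>+x. ennreal (kk (t - s) (x - y) powr (6/5)) \<partial>lborel) = (\<integral>\<^sup>+z. ennreal (kk (t - s) z powr (6/5)) \<partial>lborel)"
          by (rule nn_trans_x[where f="\<lambda>z. ennreal (kk (t - s) z powr (6/5))"]) measurable
        also have "\<dots> = ennreal ((t - s) powr (-9/10)) * ennreal K1"
          using True by (simp add: Kn_scale K1(2))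
        finally show "ennreal (\<bar>th0 s y\<bar> powr (3/2)) * (\<integral>\<^sup>+x. ennreal (kk (t - s) (x - y) powr (6/5)) \<partial>lborel)
          = ennreal (\<bar>th0 s y\<bar> powr (3/2)) * (ennreal ((t - s) powr (-9/10)) * ennreal K1)" by simp
      qed
      also have "\<dots> = A s * (ennreal ((t - s) powr (-9/10)) * ennreal K1)"
        unfolding A_def by (rule nn_integral_multc) measurable
      finally show ?thesis using True by (simp add: mult_ac)
    qed
  qed
  also have "\<dots> = ennreal K1 * (\<integral>\<^sup>+s. ennreal ((t - s) powr (-9/10)) * A s * indicator {0<..<t} s \<partial>lborel)"
    by (subst nn_integral_multc) (auto simp: mult.commute)
  finally show ?thesis .
qed


definition W :: "real \<Rightarrow> ennreal" where
  "W t = (\<integral>\<^sup>+s. ennreal ((t - s) powr (-19/20) * s powr (1/6)) * ennpow (A s) (4/3) * indicator {0<..<t} s \<partial>lborel)"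

lemma step3:
  assumes t0: "0 < t"
  shows "ennpow (\<integral>\<^sup>+s. ennreal ((t - s) powr (-9/10)) * A s * indicator {0<..<t} s \<partial>lborel) (4/3)
     \<le> W t * ennreal ((Cb2 * t powr (-1/4)) powr (1/3))"
proof -
  define g where "g s = ennreal ((t - s) powr (-57/80) * s powr (1/8)) * A s * indicator {0<..<t} s" for s :: real
  define h where "h s = ennreal ((t - s) powr (-3/16) * s powr (-1/8)) * indicator {0<..<t} s" for s :: real
  have [measurable]: "g \<in> borel_measurable lborel" "h \<in> borel_measurable lborel"
    unfolding g_def h_def by measurable
  have gh: "ennreal ((t - s) powr (-9/10)) * A s * indicator {0<..<t} s = g s * h s" for s
  proof (cases "s \<in> {0<..<t}")
    case False then show ?thesis by (simp add: g_def h_def)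
  next
    case True
    have "(t - s) powr (-57/80) * s powr (1/8) * ((t - s) powr (-3/16) * s powr (-1/8))
      = ((t - s) powr (-57/80) * (t - s) powr (-3/16)) * (s powr (1/8) * s powr (-1/8))" by (simp add: mult_ac)
    also have "(t - s) powr (-57/80) * (t - s) powr (-3/16) = (t - s) powr (-9/10)"
      by (simp add: powr_add[symmetric])
    also have "s powr (1/8) * s powr (-1/8) = 1" using True by (simp add: powr_add[symmetric])
    finally have e: "(t - s) powr (-57/80) * s powr (1/8) * ((t - s) powr (-3/16) * s powr (-1/8)) = (t - s) powr (-9/10)" by simp
    have "g s * h s = ennreal ((t - s) powr (-57/80) * s powr (1/8)) * ennreal ((t - s) powr (-3/16) * s powr (-1/8)) * A s"
      using True by (simp add: g_def h_def mult_ac)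
    also have "\<dots> = ennreal ((t - s) powr (-9/10)) * A s"
      by (simp only: e ennreal_mult'[symmetric] powr_ge_zero mult_nonneg_nonneg)
    finally show ?thesis using True by simp
  qed
  have eg: "ennpow (g s) (4/3) = ennreal ((t - s) powr (-19/20) * s powr (1/6)) * ennpow (A s) (4/3) * indicator {0<..<t} s" for s
  proof -
    have "ennpow (g s) (4/3) = ennreal (((t - s) powr (-57/80) * s powr (1/8)) powr (4/3)) * ennpow (A s) (4/3) * indicator {0<..<t} s"
      unfolding g_def by (simp add: ennpow_mult ennpow_indicator ennpow_ennreal)
    also have "((t - s) powr (-57/80) * s powr (1/8)) powr (4/3) = (t - s) powr (-19/20) * s powr (1/6)"
      by (simp add: powr_mult powr_powr)
    finally show ?thesis .
  qed
  have eh: "ennpow (h s) 4 = ennreal ((t - s) powr (-3/4) * s powr (-1/2)) * indicator {0<..<t} s" for s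
  proof -
    have "ennpow (h s) 4 = ennreal (((t - s) powr (-3/16) * s powr (-1/8)) powr 4) * indicator {0<..<t} s"
      unfolding h_def by (simp add: ennpow_mult ennpow_indicator ennpow_ennreal)
    also have "((t - s) powr (-3/16) * s powr (-1/8)) powr 4 = (t - s) powr (-3/4) * s powr (-1/2)"
      by (simp add: powr_mult powr_powr)
    finally show ?thesis .
  qed
  have "(\<integral>\<^sup>+s. ennreal ((t - s) powr (-9/10)) * A s * indicator {0<..<t} s \<partial>lborel) = (\<integral>\<^sup>+s. g s * h s \<partial>lborel)"
    unfolding gh ..
  also have "\<dots> \<le> ennpow (\<integral>\<^sup>+s. ennpow (g s) (4/3) \<partial>lborel) (1/(4/3)) * ennpow (\<integral>\<^sup>+s. ennpow (h s) 4 \<partial>lborel) (1/4)"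
    by (rule holder_ennreal) auto
  also have "\<dots> \<le> ennpow (W t) (3/4) * ennpow (ennreal (Cb2 * t powr (-1/4))) (1/4)"
  proof -
    have e43: "(1/(4/3)::real) = 3/4" by simp
    show ?thesis unfolding eg eh W_def e43
      by (intro mult_left_mono ennpow_mono Cb2 t0) auto
  qed
  finally have "ennpow (\<integral>\<^sup>+s. ennreal ((t - s) powr (-9/10)) * A s * indicator {0<..<t} s \<partial>lborel) (4/3)
     \<le> ennpow (ennpow (W t) (3/4) * ennpow (ennreal (Cb2 * t powr (-1/4))) (1/4)) (4/3)"
    by (rule ennpow_mono) simp
  also have "\<dots> = W t * ennpow (ennreal (Cb2 * t powr (-1/4))) (1/3)"
    by (simp add: ennpow_mult ennpow_ennpow)
  also have "\<dots> = W t * ennreal ((Cb2 * t powr (-1/4)) powr (1/3))"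
    using Cb2(1) by (simp add: ennpow_ennreal)
  finally show ?thesis .
qed


lemma ennpow_2: "ennpow x 2 = x ^ 2"
  by (cases x) (auto simp: ennpow_def ennreal_power powr_realpow[symmetric] top_power_ennreal)

lemma alg2:
  fixes a b z t :: real assumes "0 \<le> a" "0 \<le> b" "0 \<le> z" "0 < t"
  shows "(a * z powr (3/2) * t powr (-1/10)) powr (4/3) * (b * t powr (-1/4)) powr (1/3)
       = a powr (4/3) * b powr (1/3) * z powr 2 * t powr (-13/60)"
proof -
  have "(a * z powr (3/2) * t powr (-1/10)) powr (4/3) = a powr (4/3) * z powr 2 * t powr (-2/15)"
    using assms by (simp add: powr_mult powr_powr)
  moreover have "(b * t powr (-1/4)) powr (1/3) = b powr (1/3) * t powr (-1/12)"
    using assms by (simp add: powr_mult powr_powr)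
  moreover have "t powr (-2/15) * t powr (-1/12) = t powr (-13/60)"
    by (simp add: powr_add[symmetric])
  ultimately show ?thesis by (simp add: mult_ac)
qed

end

definition C3 :: real where "C3 = ((K1 * Cb1 * 4) powr (1/4) * K1) powr (4/3) * Cb2 powr (1/3)"

lemma C3_nonneg: "0 \<le> C3" by (simp add: C3_def)

context setting2
begin

lemma Q_meas[measurable]: "(\<lambda>x. Q t x) \<in> borel_measurable lborel"
  unfolding Q_def by measurable

lemma Lp_bound:
  assumes t: "t \<in> tint T"
  shows "(Lp_norm (3/2) (Cop u \<theta> t))\<^sup>2 \<le> ennreal (C3 * Zr powr 2 * t powr (-13/60)) * W t"
proof -
  have t0: "0 < t" using t by (simp add: tint_def)
  define c where "c = (K1 * Cb1 * 4) powr (1/4) * Zr powr (3/2) * t powr (-1/10)"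
  have c0: "0 \<le> c" by (simp add: c_def)
  define J where "J = (\<integral>\<^sup>+s. ennreal ((t - s) powr (-9/10)) * A s * indicator {0<..<t} s \<partial>lborel)"
  define I where "I = (\<integral>\<^sup>+x. ennreal (norm (Cop u \<theta> t x) powr (3/2)) \<partial>lborel)"
  have hI: "I \<le> ennreal (c * K1) * J"
  proof -
    have "I \<le> (\<integral>\<^sup>+x. Q t x * ennreal c \<partial>lborel)"
      unfolding I_def
    proof (intro nn_integral_mono)
      fix x :: "real^3"
      have "ennreal (norm (Cop u \<theta> t x) powr (3/2)) = ennpow (ennreal \<bar>Cop u \<theta> t x\<bar>) (3/2)"
        by (simp add: ennpow_ennreal)
      also have "\<dots> \<le> ennpow (F t x) (3/2)" by (intro ennpow_mono Cop_bound t) simp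
      also have "\<dots> \<le> Q t x * ennreal c" unfolding c_def by (rule step1[OF t])
      finally show "ennreal (norm (Cop u \<theta> t x) powr (3/2)) \<le> Q t x * ennreal c" .
    qed
    also have "(\<integral>\<^sup>+x. Q t x * ennreal c \<partial>lborel) = (\<integral>\<^sup>+x. Q t x \<partial>lborel) * ennreal c"
      by (rule nn_integral_multc) measurable
    also have "\<dots> = ennreal (c * K1) * J"
      unfolding step2[OF t0] J_def using c0 K1(1) by (simp add: ennreal_mult mult_ac)
    finally show ?thesis .
  qed
  have "(Lp_norm (3/2) (Cop u \<theta> t))\<^sup>2 = ennpow (ennpow I (1/(3/2))) 2"
    by (simp add: Lp_norm_def I_def ennpow_2)
  also have "\<dots> = ennpow I (4/3)" by (simp add: ennpow_ennpow)
  also have "\<dots> \<le> ennpow (ennreal (c * K1) * J) (4/3)" by (intro ennpow_mono hI) simp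
  also have "\<dots> = ennreal ((c * K1) powr (4/3)) * ennpow J (4/3)"
    using c0 K1(1) by (simp add: ennpow_mult ennpow_ennreal)
  also have "\<dots> \<le> ennreal ((c * K1) powr (4/3)) * (W t * ennreal ((Cb2 * t powr (-1/4)) powr (1/3)))"
    unfolding J_def by (intro mult_left_mono step3 t0) simp
  also have "\<dots> = ennreal ((c * K1) powr (4/3) * (Cb2 * t powr (-1/4)) powr (1/3)) * W t"
    by (simp add: ennreal_mult mult_ac)
  also have "(c * K1) powr (4/3) * (Cb2 * t powr (-1/4)) powr (1/3) = C3 * Zr powr 2 * t powr (-13/60)"
  proof -
    have "c * K1 = ((K1 * Cb1 * 4) powr (1/4) * K1) * Zr powr (3/2) * t powr (-1/10)"
      by (simp add: c_def mult_ac)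
    then show ?thesis unfolding C3_def
      by (simp only: alg2[of "(K1 * Cb1 * 4) powr (1/4) * K1" Cb2 Zr t, OF _ Cb2(1) Zr t0] K1(1) powr_ge_zero mult_nonneg_nonneg)
  qed
  finally show ?thesis .
qed

end

context setting2
begin
lemma A_meas2[measurable]: "(\<lambda>p. A (f p)) \<in> borel_measurable M" if [measurable]: "f \<in> borel_measurable M"
proof -
  have "A \<in> borel_measurable borel" using A_meas by simp
  then show ?thesis using measurable_compose[OF that] by blast
qed
lemma pred_Ioo[measurable]: "Measurable.pred M (\<lambda>x. (f x::real) \<in> {0<..<g x})"
  if [measurable]: "f \<in> borel_measurable M" "g \<in> borel_measurable M"
  unfolding greaterThanLessThan_iff by measurable

lemma Aq_eq: "ennpow (A s) (4/3) = (Lp_norm (3/2) (\<theta> s))\<^sup>2 * indicator (tint T) s"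
proof (cases "s \<in> tint T")
  case True
  then show ?thesis
    by (simp add: A_def th0_def Lp_norm_def ennpow_2[symmetric] ennpow_ennpow)
next
  case False
  then show ?thesis by (simp add: A_def th0_def)
qed

lemma step4:
  "(\<integral>\<^sup>+t. (Lp_norm (3/2) (Cop u \<theta> t))\<^sup>2 * indicator (tint T) t \<partial>lborel)
     \<le> ennreal (C3 * Zr powr 2 * Ct) * (\<integral>\<^sup>+s. (Lp_norm (3/2) (\<theta> s))\<^sup>2 * indicator (tint T) s \<partial>lborel)"
proof -
  define G where "G t s = ennreal (t powr (-13/60) * (t - s) powr (-19/20)) * (ennreal (s powr (1/6)) * ennpow (A s) (4/3)) * indicator {0<..<t} s" for t s :: real
  have [measurable]: "(\<lambda>(t, s). G t s) \<in> borel_measurable (lborel \<Otimes>\<^sub>M lborel)"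
    unfolding G_def by measurable
  have "(\<integral>\<^sup>+t. (Lp_norm (3/2) (Cop u \<theta> t))\<^sup>2 * indicator (tint T) t \<partial>lborel)
     \<le> (\<integral>\<^sup>+t. ennreal (C3 * Zr powr 2) * (\<integral>\<^sup>+s. G t s \<partial>lborel) \<partial>lborel)"
  proof (intro nn_integral_mono)
    fix t :: real
    show "(Lp_norm (3/2) (Cop u \<theta> t))\<^sup>2 * indicator (tint T) t \<le> ennreal (C3 * Zr powr 2) * (\<integral>\<^sup>+s. G t s \<partial>lborel)"
    proof (cases "t \<in> tint T")
      case False then show ?thesis by simp
    next
      case True
      have "(Lp_norm (3/2) (Cop u \<theta> t))\<^sup>2 * indicator (tint T) t \<le> ennreal (C3 * Zr powr 2 * t powr (-13/60)) * W t"
        using Lp_bound[OF True] True by simp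
      also have "\<dots> = ennreal (C3 * Zr powr 2) * (ennreal (t powr (-13/60)) * W t)"
        using C3_nonneg by (simp add: ennreal_mult mult.assoc)
      also have "ennreal (t powr (-13/60)) * W t = (\<integral>\<^sup>+s. G t s \<partial>lborel)"
        unfolding W_def G_def
        by (subst nn_integral_cmult[symmetric]) (auto intro!: nn_integral_cong simp: ennreal_mult mult_ac)
      finally show ?thesis .
    qed
  qed
  also have "\<dots> = ennreal (C3 * Zr powr 2) * (\<integral>\<^sup>+s. \<integral>\<^sup>+t. G t s \<partial>lborel \<partial>lborel)"
    by (subst nn_integral_cmult) (auto simp: lborel_pair.Fubini[where f="\<lambda>(t, s). G t s", simplified])
  finally have A1: "(\<integral>\<^sup>+t. (Lp_norm (3/2) (Cop u \<theta> t))\<^sup>2 * indicator (tint T) t \<partial>lborel)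
     \<le> ennreal (C3 * Zr powr 2) * (\<integral>\<^sup>+s. \<integral>\<^sup>+t. G t s \<partial>lborel \<partial>lborel)" .
  have "(\<integral>\<^sup>+s. \<integral>\<^sup>+t. G t s \<partial>lborel \<partial>lborel) \<le> (\<integral>\<^sup>+s. ennreal Ct * ennpow (A s) (4/3) \<partial>lborel)"
  proof (intro nn_integral_mono)
    fix s :: real
    show "(\<integral>\<^sup>+t. G t s \<partial>lborel) \<le> ennreal Ct * ennpow (A s) (4/3)"
    proof (cases "0 < s")
      case False then show ?thesis by (simp add: G_def)
    next
      case True
      have "(\<integral>\<^sup>+t. G t s \<partial>lborel) = (\<integral>\<^sup>+t. (ennreal (s powr (1/6)) * ennpow (A s) (4/3)) * (ennreal (t powr (-13/60) * (t - s) powr (-19/20)) * indicator {s<..} t) \<partial>lborel)"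
        using True by (intro nn_integral_cong) (simp add: G_def indicator_def mult_ac)
      also have "\<dots> = (ennreal (s powr (1/6)) * ennpow (A s) (4/3)) * (\<integral>\<^sup>+t. ennreal (t powr (-13/60) * (t - s) powr (-19/20)) * indicator {s<..} t \<partial>lborel)"
        by (rule nn_integral_cmult) measurable
      also have "\<dots> \<le> (ennreal (s powr (1/6)) * ennpow (A s) (4/3)) * ennreal (Ct * s powr (-1/6))"
        by (intro mult_left_mono Ct(2) True) simp
      also have "\<dots> = ennreal (s powr (1/6) * (Ct * s powr (-1/6))) * ennpow (A s) (4/3)"
        using Ct(1) by (simp add: ennreal_mult mult_ac)
      also have "s powr (1/6) * (Ct * s powr (-1/6)) = Ct"
        using True by (simp add: mult.left_commute[of _ Ct] powr_add[symmetric])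
      finally show ?thesis by (simp add: mult_ac)
    qed
  qed
  also have "(\<integral>\<^sup>+s. ennreal Ct * ennpow (A s) (4/3) \<partial>lborel) = ennreal Ct * (\<integral>\<^sup>+s. (Lp_norm (3/2) (\<theta> s))\<^sup>2 * indicator (tint T) s \<partial>lborel)"
    unfolding Aq_eq[symmetric] by (rule nn_integral_cmult) measurable
  finally have A2: "(\<integral>\<^sup>+s. \<integral>\<^sup>+t. G t s \<partial>lborel \<partial>lborel) \<le> ennreal Ct * (\<integral>\<^sup>+s. (Lp_norm (3/2) (\<theta> s))\<^sup>2 * indicator (tint T) s \<partial>lborel)" .
  have "(\<integral>\<^sup>+t. (Lp_norm (3/2) (Cop u \<theta> t))\<^sup>2 * indicator (tint T) t \<partial>lborel)
     \<le> ennreal (C3 * Zr powr 2) * (ennreal Ct * (\<integral>\<^sup>+s. (Lp_norm (3/2) (\<theta> s))\<^sup>2 * indicator (tint T) s \<partial>lborel))"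
    by (rule order_trans[OF A1 mult_left_mono[OF A2]]) simp
  also have "\<dots> = ennreal (C3 * Zr powr 2 * Ct) * (\<integral>\<^sup>+s. (Lp_norm (3/2) (\<theta> s))\<^sup>2 * indicator (tint T) s \<partial>lborel)"
    using C3_nonneg Ct(1) Zr by (simp add: ennreal_mult mult.assoc)
  finally show ?thesis .
qed

end

lemma ubound_from_Z:
  assumes Z: "Z_norm 6 T u = ennreal Zr" and Zr: "0 \<le> Zr"
  shows "AE s in lborel. s \<in> tint T \<longrightarrow> (\<integral>\<^sup>+y. ennreal (norm (u s y) powr 6) \<partial>lborel) \<le> ennreal (Zr powr 6 * s powr (-3/2))"
proof -
  let ?g = "\<lambda>t. ennreal (t powr (1/2 * (1 - 3 / 6))) * Lp_norm 6 (u t)"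
  have "AE s in restrict_space lborel (tint T). ?g s \<le> Z_norm 6 T u"
    unfolding Z_norm_def by (rule esssup_AE)
  then have "AE s in lborel. s \<in> tint T \<longrightarrow> ?g s \<le> ennreal Zr"
    unfolding Z by (subst (asm) AE_restrict_space_iff) auto
  then show ?thesis
  proof eventually_elim
    fix s assume h: "s \<in> tint T \<longrightarrow> ?g s \<le> ennreal Zr"
    show "s \<in> tint T \<longrightarrow> (\<integral>\<^sup>+y. ennreal (norm (u s y) powr 6) \<partial>lborel) \<le> ennreal (Zr powr 6 * s powr (-3/2))"
    proof
      assume sT: "s \<in> tint T"
      then have s0: "0 < s" by (simp add: tint_def)
      define I where "I = (\<integral>\<^sup>+y. ennreal (norm (u s y) powr 6) \<partial>lborel)"
      have "?g s = ennreal (s powr (1/4)) * ennpow I (1/6)"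
        by (simp add: Lp_norm_def I_def)
      then have "ennreal (s powr (1/4)) * ennpow I (1/6) \<le> ennreal Zr" using h sT by simp
      then have "ennpow (ennreal (s powr (1/4)) * ennpow I (1/6)) 6 \<le> ennpow (ennreal Zr) 6"
        by (rule ennpow_mono) simp
      also have "ennpow (ennreal Zr) 6 = ennreal (Zr powr 6)" using Zr by (simp add: ennpow_ennreal)
      also have "ennpow (ennreal (s powr (1/4)) * ennpow I (1/6)) 6 = ennreal (s powr (3/2)) * I"
        by (simp add: ennpow_mult ennpow_ennpow ennpow_ennreal powr_powr)
      finally have le: "ennreal (s powr (3/2)) * I \<le> ennreal (Zr powr 6)" .
      have "I = ennreal (s powr (-3/2)) * (ennreal (s powr (3/2)) * I)"
      proof -
        have "s powr (-3/2) * s powr (3/2) = 1" using s0 by (simp add: powr_add[symmetric])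
        then have "ennreal (s powr (-3/2)) * ennreal (s powr (3/2)) = 1"
          by (simp add: ennreal_mult[symmetric])
        then show ?thesis by (simp add: mult.assoc[symmetric])
      qed
      also have "\<dots> \<le> ennreal (s powr (-3/2)) * ennreal (Zr powr 6)"
        by (intro mult_left_mono le) simp
      also have "\<dots> = ennreal (Zr powr 6 * s powr (-3/2))"
        by (simp add: ennreal_mult[symmetric] mult.commute)
      finally show "I \<le> ennreal (Zr powr 6 * s powr (-3/2))" .
    qed
  qed
qed

theorem proposition5p1:
  "\<exists>\<kappa>>0. \<forall>(T::ereal) (u::real \<Rightarrow> real^3 \<Rightarrow> real^3) (\<theta>::real \<Rightarrow> real^3 \<Rightarrow> real).
     0 < T \<longrightarrow>
     (\<lambda>(t, y). u t y) \<in> borel_measurable (restrict_space (lborel \<Otimes>\<^sub>M lborel) (tint T \<times> UNIV)) \<longrightarrow>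
     Z_norm 6 T u < \<infinity> \<longrightarrow>
     (\<lambda>(t, y). \<theta> t y) \<in> borel_measurable (restrict_space (lborel \<Otimes>\<^sub>M lborel) (tint T \<times> UNIV)) \<longrightarrow>
     L2Lp_norm T (3/2) \<theta> < \<infinity> \<longrightarrow>
     L2Lp_norm T (3/2) (Cop u \<theta>) \<le> ennreal \<kappa> * Z_norm 6 T u * L2Lp_norm T (3/2) \<theta>"
proof (intro exI[of _ "sqrt (C3 * Ct) + 1"] conjI allI impI)
  show "0 < sqrt (C3 * Ct) + 1" using real_sqrt_ge_zero[OF mult_nonneg_nonneg[OF C3_nonneg Ct(1)]] by linarith
  fix T :: ereal and u :: "real \<Rightarrow> real^3 \<Rightarrow> real^3" and \<theta> :: "real \<Rightarrow> real^3 \<Rightarrow> real"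
  assume T0: "0 < T"
  assume um: "(\<lambda>(t, y). u t y) \<in> borel_measurable (restrict_space (lborel \<Otimes>\<^sub>M lborel) (tint T \<times> UNIV))"
    and Zfin: "Z_norm 6 T u < \<infinity>"
    and thmm: "(\<lambda>(t, y). \<theta> t y) \<in> borel_measurable (restrict_space (lborel \<Otimes>\<^sub>M lborel) (tint T \<times> UNIV))"
    and Lfin: "L2Lp_norm T (3/2) \<theta> < \<infinity>"
  obtain Zr where hZ: "Z_norm 6 T u = ennreal Zr" "0 \<le> Zr"
    using Zfin by (cases "Z_norm 6 T u") auto
  interpret setting2 T u \<theta> Zr
    using um thmm hZ ubound_from_Z[OF hZ] by unfold_locales auto
  define N where "N = (\<integral>\<^sup>+s. (Lp_norm (3/2) (\<theta> s))\<^sup>2 * indicator (tint T) s \<partial>lborel)"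
  have "L2Lp_norm T (3/2) (Cop u \<theta>) = ennpow (\<integral>\<^sup>+t. (Lp_norm (3/2) (Cop u \<theta> t))\<^sup>2 * indicator (tint T) t \<partial>lborel) (1/2)"
    by (simp add: L2Lp_norm_def)
  also have "\<dots> \<le> ennpow (ennreal (C3 * Zr powr 2 * Ct) * N) (1/2)"
    unfolding N_def by (intro ennpow_mono step4) simp
  also have "\<dots> = ennreal ((C3 * Zr powr 2 * Ct) powr (1/2)) * ennpow N (1/2)"
    using C3_nonneg Ct(1) by (simp add: ennpow_mult ennpow_ennreal)
  also have "(C3 * Zr powr 2 * Ct) powr (1/2) = sqrt (C3 * Ct) * Zr"
  proof -
    have "(C3 * Zr powr 2 * Ct) powr (1/2) = (C3 * Ct) powr (1/2) * (Zr powr 2) powr (1/2)"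
      using C3_nonneg Ct(1) by (simp add: powr_mult[symmetric] mult_ac)
    also have "(Zr powr 2) powr (1/2) = Zr" using hZ(2) by (simp add: powr_powr powr_one)
    finally show ?thesis using C3_nonneg Ct(1) by (simp add: powr_half_sqrt)
  qed
  also have "ennpow N (1/2) = L2Lp_norm T (3/2) \<theta>"
    by (simp add: L2Lp_norm_def N_def)
  also have "ennreal (sqrt (C3 * Ct) * Zr) * L2Lp_norm T (3/2) \<theta>
      \<le> ennreal (sqrt (C3 * Ct) + 1) * Z_norm 6 T u * L2Lp_norm T (3/2) \<theta>"
  proof -
    have sq: "0 \<le> sqrt (C3 * Ct)" using C3_nonneg Ct(1) by simp
    have "ennreal (sqrt (C3 * Ct) * Zr) \<le> ennreal ((sqrt (C3 * Ct) + 1) * Zr)"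
      using hZ(2) by (intro ennreal_leI mult_right_mono) auto
    also have "\<dots> = ennreal (sqrt (C3 * Ct) + 1) * ennreal Zr"
      using sq hZ(2) by (intro ennreal_mult) auto
    finally show ?thesis unfolding hZ(1) by (rule mult_right_mono) simp
  qed
  finally show "L2Lp_norm T (3/2) (Cop u \<theta>) \<le> ennreal (sqrt (C3 * Ct) + 1) * Z_norm 6 T u * L2Lp_norm T (3/2) \<theta>" .
qed

end
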